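(* Let $P'=(P_1,\dots,P_m,0,\dots,0)$ and $Q'=(0,\dots,0)$ (both of length $m+n$) and $K:=L^{\mathrm{skew}}_{A_{m+n-1}}(P'/Q')$, the latter encoded by arrays $(g'_{k,l})_{0\le k\le m+n,\ l\in C'_k}$ with $C'_k:=\{k-(m+n-1),\dots,k\}$ (the construction below with $m+n$ in place of both $m$ and $n$), and with its own edge coefficients $X',Y'$ given by the same formulas. For $x\in L:=L^{\mathrm{skew}}_{A_{n-1}}(P/Q)$ with array $(g_{i,j}(x))$, define the array $\phi(x)$ by: $g'_{k,l}(\phi(x)):=0$ if $l\le 0$; $:=g_{0,l-m}(x)$ if $1\le k\le m-1$, $1\le l\le k$; $:=0$ if $m+1\le k\le m+n$, $1\le l\le k-m$; $:=g_{k-m,l-m}(x)$ if $m\le k\le m+n$, $k-m+1\le l\le k$. Then: $\phi(x)$ is the array of an element of $K$, and $\phi:L\to K$ is injective; $S\xrightarrow{i}T$ in $L$ iff $\phi(S)\xrightarrow{i+m}\phi(T)$ in $K$; $\phi(L)$ equals the $J$-component of $\phi(M)$ in $K$, where $J=\{m+1,\dots,m+n-1\}$ and $M$ is the maximum of $L$; $m_{i+m}(\phi(x))=m_i(x)$ for all $x\in L$ and $1\le i\le n-1$ (weights computed in $K$ and $L$ respectively); and for every edge $S\xrightarrow{i}T$ of $L$, $X'_{\phi(T),\phi(S)}=X_{T,S}$ and $Y'_{\phi(S),\phi(T)}=Y_{S,T}$.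
   Context: Fix integers $m\ge n\ge 2$ and weakly decreasing $m$-tuples of nonnegative integers $P=(P_1,\dots,P_m)$ and $Q=(Q_1,\dots,Q_m)$ with $Q_r\le P_r$ for all $r$. The skew shape $P/Q$ is the set of cells $(r,c)$ (row $r$, column $c$, matrix convention) with $Q_r<c\le P_r$; assume no column of $P/Q$ contains more than $n$ cells. $L^{\mathrm{skew}}_{A_{n-1}}(P/Q)$ is the set of semistandard tableaux $T$ of shape $P/Q$ with entries in $\{1,\dots,n\}$ (entries weakly increase left to right along rows and strictly increase top to bottom down columns), partially ordered by $S\le T$ iff $S_{r,c}\ge T_{r,c}$ for every cell $(r,c)$. The Hasse diagram edges are colored: $S\to T$ is a covering iff $S,T$ differ in exactly one cell $(r,c)$ and $S_{r,c}=T_{r,c}+1$; this edge gets color $i:=T_{r,c}\in\{1,\dots,n-1\}$, written $S\xrightarrow{i}T$. GT parallelograms: for $0\le i\le n$ put $C_i:=\{i-(m-1),\dots,i-1,i\}$. To each tableau $T$ associate the integer array $(g_{i,j}(T))_{0\le i\le n,\,j\in C_i}$ defined by $g_{i,i+1-r}(T):=Q_r+|\{c:(r,c)\in P/Q,\ T_{r,c}\le i\}|$ for $1\le r\le m$. (Thus $g_{0,j}=Q_{1-j}$, $g_{n,j}=P_{n+1-j}$, and these are exactly the integer arrays with these boundary columns satisfying $\max(g_{i-1,j-1},g_{i+1,j})\le g_{i,j}\le\min(g_{i-1,j},g_{i+1,j+1})$, undefined terms ignored.) One has $S\xrightarrow{i}T$ iff the arrays of $S$ and $T$ agree except at exactly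 one position $(i,j)$, where $g_{i,j}(T)=g_{i,j}(S)+1$. Edge coefficients: for an edge $S\xrightarrow{i}T$ with differing position $(i,j)$, writing $g_{p,q}:=g_{p,q}(T)$, $$X_{T,S}:=-\frac{\prod_{k\in C_{i+1}}(g_{i,j}-g_{i+1,k}+j-k)}{\prod_{k\in C_i\setminus\{j\}}(g_{i,j}-g_{i,k}+j-k-1)},\qquad Y_{S,T}:=\frac{\prod_{k\in C_{i-1}}(g_{i,j}-g_{i-1,k}+j-k-1)}{\prod_{k\in C_i\setminus\{j\}}(g_{i,j}-g_{i,k}+j-k)}.$$ Components and weights on colored posets: for a set $J$ of colors, the $J$-component of $t$ is the set of elements reachable from $t$ by undirected paths using only edges with colors in $J$. For a single color $i$, with $l_i(t)$ the length of the $i$-component of $t$ and $\rho_i(t)$ the rank of $t$ in it, $m_i(t):=2\rho_i(t)-l_i(t)$. *)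

theory Defs
  imports Complex_Main
begin

text \<open>Tuples P, Q are functions nat => nat, only the values at 1..mm matter.
  Cells are pairs (row, column) with rows and columns indexed from 1.
  A tableau is a function on cells, normalised to 0 outside the shape.\<close>

definition skew_cells :: "nat \<Rightarrow> (nat \<Rightarrow> nat) \<Rightarrow> (nat \<Rightarrow> nat) \<Rightarrow> (nat \<times> nat) set" where
  "skew_cells mm P Q = {(r, c). 1 \<le> r \<and> r \<le> mm \<and> Q r < c \<and> c \<le> P r}"

definition skew_tabs :: "nat \<Rightarrow> nat \<Rightarrow> (nat \<Rightarrow> nat) \<Rightarrow> (nat \<Rightarrow> nat) \<Rightarrow> (nat \<times> nat \<Rightarrow> nat) set" where
  "skew_tabs mm n P Q = {T.
     (\<forall>x. x \<notin> skew_cells mm P Q \<longrightarrow> T x = 0) \<and>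
     (\<forall>(r, c) \<in> skew_cells mm P Q. 1 \<le> T (r, c) \<and> T (r, c) \<le> n) \<and>
     (\<forall>r c c'. (r, c) \<in> skew_cells mm P Q \<longrightarrow> (r, c') \<in> skew_cells mm P Q \<longrightarrow> c < c'
                \<longrightarrow> T (r, c) \<le> T (r, c')) \<and>
     (\<forall>r r' c. (r, c) \<in> skew_cells mm P Q \<longrightarrow> (r', c) \<in> skew_cells mm P Q \<longrightarrow> r < r'
                \<longrightarrow> T (r, c) < T (r', c))}"

text \<open>Partial order: S <= T iff S has entries >= those of T in every cell.\<close>
definition tab_le :: "nat \<Rightarrow> (nat \<Rightarrow> nat) \<Rightarrow> (nat \<Rightarrow> nat) \<Rightarrow> (nat \<times> nat \<Rightarrow> nat) \<Rightarrow> (nat \<times> nat \<Rightarrow> nat) \<Rightarrow> bool" where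
  "tab_le mm P Q S T \<longleftrightarrow> (\<forall>x \<in> skew_cells mm P Q. T x \<le> S x)"

definition tab_max :: "nat \<Rightarrow> nat \<Rightarrow> (nat \<Rightarrow> nat) \<Rightarrow> (nat \<Rightarrow> nat) \<Rightarrow> (nat \<times> nat \<Rightarrow> nat)" where
  "tab_max mm n P Q = (THE M. M \<in> skew_tabs mm n P Q \<and> (\<forall>x \<in> skew_tabs mm n P Q. tab_le mm P Q x M))"

text \<open>Coloured Hasse-diagram edge S --i--> T (covering relation with its colour).\<close>
definition tab_edge :: "nat \<Rightarrow> nat \<Rightarrow> (nat \<Rightarrow> nat) \<Rightarrow> (nat \<Rightarrow> nat) \<Rightarrow> (nat \<times> nat \<Rightarrow> nat) \<Rightarrow> nat \<Rightarrow> (nat \<times> nat \<Rightarrow> nat) \<Rightarrow> bool" where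
  "tab_edge mm n P Q S i T \<longleftrightarrow> S \<in> skew_tabs mm n P Q \<and> T \<in> skew_tabs mm n P Q \<and>
     (\<exists>x \<in> skew_cells mm P Q. S x = T x + 1 \<and> T x = i \<and>
        (\<forall>y \<in> skew_cells mm P Q. y \<noteq> x \<longrightarrow> S y = T y))"

definition Cset :: "nat \<Rightarrow> int \<Rightarrow> int set" where
  "Cset mm i = {i - (int mm - 1) .. i}"

definition garr :: "nat \<Rightarrow> (nat \<Rightarrow> nat) \<Rightarrow> (nat \<Rightarrow> nat) \<Rightarrow> (nat \<times> nat \<Rightarrow> nat) \<Rightarrow> int \<Rightarrow> int \<Rightarrow> int" where
  "garr mm P Q T i j = (let r = i + 1 - j in
     if 1 \<le> r \<and> r \<le> int mm
     then int (Q (nat r)) + int (card {c. (nat r, c) \<in> skew_cells mm P Q \<and> int (T (nat r, c)) \<le> i})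
     else 0)"

definition diff_pos :: "nat \<Rightarrow> (nat \<Rightarrow> nat) \<Rightarrow> (nat \<Rightarrow> nat) \<Rightarrow> (nat \<times> nat \<Rightarrow> nat) \<Rightarrow> (nat \<times> nat \<Rightarrow> nat) \<Rightarrow> int \<Rightarrow> int" where
  "diff_pos mm P Q S T i = (THE j. j \<in> Cset mm i \<and> garr mm P Q S i j \<noteq> garr mm P Q T i j)"

definition Xcoef :: "nat \<Rightarrow> (nat \<Rightarrow> nat) \<Rightarrow> (nat \<Rightarrow> nat) \<Rightarrow> (nat \<times> nat \<Rightarrow> nat) \<Rightarrow> (nat \<times> nat \<Rightarrow> nat) \<Rightarrow> nat \<Rightarrow> real" where
  "Xcoef mm P Q T S i = (let ii = int i; j = diff_pos mm P Q S T ii; g = garr mm P Q T in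
     - (\<Prod>k \<in> Cset mm (ii + 1). real_of_int (g ii j - g (ii + 1) k + j - k))
     / (\<Prod>k \<in> Cset mm ii - {j}. real_of_int (g ii j - g ii k + j - k - 1)))"

definition Ycoef :: "nat \<Rightarrow> (nat \<Rightarrow> nat) \<Rightarrow> (nat \<Rightarrow> nat) \<Rightarrow> (nat \<times> nat \<Rightarrow> nat) \<Rightarrow> (nat \<times> nat \<Rightarrow> nat) \<Rightarrow> nat \<Rightarrow> real" where
  "Ycoef mm P Q S T i = (let ii = int i; j = diff_pos mm P Q S T ii; g = garr mm P Q T in
     (\<Prod>k \<in> Cset mm (ii - 1). real_of_int (g ii j - g (ii - 1) k + j - k - 1))
     / (\<Prod>k \<in> Cset mm ii - {j}. real_of_int (g ii j - g ii k + j - k)))"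

definition col_adj :: "('a \<Rightarrow> nat \<Rightarrow> 'a \<Rightarrow> bool) \<Rightarrow> nat set \<Rightarrow> 'a \<Rightarrow> 'a \<Rightarrow> bool" where
  "col_adj E J a b \<longleftrightarrow> (\<exists>i \<in> J. E a i b \<or> E b i a)"

definition component :: "('a \<Rightarrow> nat \<Rightarrow> 'a \<Rightarrow> bool) \<Rightarrow> nat set \<Rightarrow> 'a \<Rightarrow> 'a set" where
  "component E J t = {s. (col_adj E J)\<^sup>*\<^sup>* t s}"

definition col_path :: "('a \<Rightarrow> nat \<Rightarrow> 'a \<Rightarrow> bool) \<Rightarrow> nat \<Rightarrow> 'a list \<Rightarrow> bool" where
  "col_path E i xs \<longleftrightarrow> xs \<noteq> [] \<and> (\<forall>k. Suc k < length xs \<longrightarrow> E (xs ! k) i (xs ! Suc k))"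

definition comp_length :: "('a \<Rightarrow> nat \<Rightarrow> 'a \<Rightarrow> bool) \<Rightarrow> nat \<Rightarrow> 'a \<Rightarrow> nat" where
  "comp_length E i t = Max {length xs - 1 | xs. col_path E i xs \<and> hd xs \<in> component E {i} t}"

definition comp_rank :: "('a \<Rightarrow> nat \<Rightarrow> 'a \<Rightarrow> bool) \<Rightarrow> nat \<Rightarrow> 'a \<Rightarrow> nat" where
  "comp_rank E i t = Max {length xs - 1 | xs. col_path E i xs \<and> last xs = t}"

definition weight :: "('a \<Rightarrow> nat \<Rightarrow> 'a \<Rightarrow> bool) \<Rightarrow> nat \<Rightarrow> 'a \<Rightarrow> int" where
  "weight E i t = 2 * int (comp_rank E i t) - int (comp_length E i t)"

definition ext_P :: "nat \<Rightarrow> (nat \<Rightarrow> nat) \<Rightarrow> nat \<Rightarrow> nat" where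
  "ext_P m P r = (if r \<le> m then P r else 0)"

definition zero_Q :: "nat \<Rightarrow> nat" where
  "zero_Q r = 0"

definition phi_arr :: "nat \<Rightarrow> (int \<Rightarrow> int \<Rightarrow> int) \<Rightarrow> int \<Rightarrow> int \<Rightarrow> int" where
  "phi_arr m g k l =
     (if l \<le> 0 then 0
      else if 1 \<le> k \<and> k \<le> int m - 1 \<and> 1 \<le> l \<and> l \<le> k then g 0 (l - int m)
      else if int m + 1 \<le> k \<and> 1 \<le> l \<and> l \<le> k - int m then 0
      else if int m \<le> k \<and> k - int m + 1 \<le> l \<and> l \<le> k then g (k - int m) (l - int m)
      else 0)"

definition phi :: "nat \<Rightarrow> nat \<Rightarrow> (nat \<Rightarrow> nat) \<Rightarrow> (nat \<Rightarrow> nat) \<Rightarrow> (nat \<times> nat \<Rightarrow> nat) \<Rightarrow> (nat \<times> nat \<Rightarrow> nat)" where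
  "phi m n P Q x = (THE y. y \<in> skew_tabs (m + n) (m + n) (ext_P m P) zero_Q \<and>
     (\<forall>k \<in> {0 .. int (m + n)}. \<forall>l \<in> Cset (m + n) k.
        garr (m + n) (ext_P m P) zero_Q y k l = phi_arr m (garr m P Q x) k l))"

end

theory Submission
  imports Defs
begin


lemma cells_iff: "(r, c) \<in> skew_cells mm P Q \<longleftrightarrow> 1 \<le> r \<and> r \<le> mm \<and> Q r < c \<and> c \<le> P r"
  by (simp add: skew_cells_def)

lemma tabsD:
  assumes "y \<in> skew_tabs mm N P Q"
  shows "\<And>x. x \<notin> skew_cells mm P Q \<Longrightarrow> y x = 0"
    and "\<And>r c. (r, c) \<in> skew_cells mm P Q \<Longrightarrow> 1 \<le> y (r, c) \<and> y (r, c) \<le> N"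
    and "\<And>r c c'. (r, c) \<in> skew_cells mm P Q \<Longrightarrow> (r, c') \<in> skew_cells mm P Q \<Longrightarrow> c < c' \<Longrightarrow> y (r, c) \<le> y (r, c')"
    and "\<And>r r' c. (r, c) \<in> skew_cells mm P Q \<Longrightarrow> (r', c) \<in> skew_cells mm P Q \<Longrightarrow> r < r' \<Longrightarrow> y (r, c) < y (r', c)"
  using assms unfolding skew_tabs_def mem_Collect_eq by blast+

lemma row_finite: "finite {c. (r, c) \<in> skew_cells mm P Q \<and> R c}"
  by (rule finite_subset[of _ "{..P r}"]) (auto simp: cells_iff)

lemma garr_row:
  assumes "1 \<le> r" "r \<le> mm"
  shows "garr mm P Q y k (k + 1 - int r) = int (Q r) + int (card {c. (r, c) \<in> skew_cells mm P Q \<and> int (y (r, c)) \<le> k})"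
  using assms by (simp add: garr_def Let_def)

lemma garr_thresh:
  assumes y: "y \<in> skew_tabs mm N P Q" and rc: "(r, c) \<in> skew_cells mm P Q"
  shows "int (y (r, c)) \<le> k \<longleftrightarrow> int c \<le> garr mm P Q y k (k + 1 - int r)"
proof -
  define S where "S = {c'. (r, c') \<in> skew_cells mm P Q \<and> int (y (r, c')) \<le> k}"
  have fS: "finite S" unfolding S_def by (rule row_finite)
  from rc have r: "1 \<le> r" "r \<le> mm" "Q r < c" "c \<le> P r" by (auto simp: cells_iff)
  have g: "garr mm P Q y k (k + 1 - int r) = int (Q r) + int (card S)"
    unfolding S_def using r by (simp add: garr_row)
  show ?thesis
  proof
    assume le: "int (y (r, c)) \<le> k"
    have "{Q r + 1..c} \<subseteq> S"
    proof
      fix c' assume c': "c' \<in> {Q r + 1..c}"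
      then have cc: "(r, c') \<in> skew_cells mm P Q" using r by (auto simp: cells_iff)
      have "y (r, c') \<le> y (r, c)"
        using c' tabsD(3)[OF y cc rc] by (cases "c' = c") auto
      then show "c' \<in> S" using le cc unfolding S_def by auto
    qed
    then have "card {Q r + 1..c} \<le> card S" using fS by (rule card_mono[rotated])
    then show "int c \<le> garr mm P Q y k (k + 1 - int r)" using g r by simp
  next
    assume ge: "int c \<le> garr mm P Q y k (k + 1 - int r)"
    show "int (y (r, c)) \<le> k"
    proof (rule ccontr)
      assume nle: "\<not> int (y (r, c)) \<le> k"
      have "S \<subseteq> {Q r + 1..c - 1}"
      proof
        fix c' assume c': "c' \<in> S"
        then have cc: "(r, c') \<in> skew_cells mm P Q" and yk: "int (y (r, c')) \<le> k" unfolding S_def by auto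
        have "c' < c"
        proof (rule ccontr)
          assume "\<not> c' < c"
          then have "y (r, c) \<le> y (r, c')" using tabsD(3)[OF y rc cc] by (cases "c' = c") auto
          then show False using nle yk by simp
        qed
        then show "c' \<in> {Q r + 1..c - 1}" using cc by (auto simp: cells_iff)
      qed
      then have "card S \<le> card {Q r + 1..c - 1}" by (rule card_mono[rotated]) simp
      then show False using g ge r by simp
    qed
  qed
qed

lemma garr_determines:
  assumes y: "y \<in> skew_tabs mm N P Q" and y': "y' \<in> skew_tabs mm N P Q"
    and eq: "\<forall>k \<in> {0 .. int N}. \<forall>l \<in> Cset mm k. garr mm P Q y k l = garr mm P Q y' k l"
  shows "y = y'"
proof
  fix w
  show "y w = y' w"
  proof (cases "w \<in> skew_cells mm P Q")
    case False then show ?thesis using tabsD(1)[OF y] tabsD(1)[OF y'] by simp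
  next
    case True
    obtain r c where w: "w = (r, c)" by (cases w)
    with True have rc: "(r, c) \<in> skew_cells mm P Q" by simp
    then have r: "1 \<le> r" "r \<le> mm" by (auto simp: cells_iff)
    have key: "int (y (r, c)) \<le> k \<longleftrightarrow> int (y' (r, c)) \<le> k" if "k \<in> {0 .. int N}" for k
    proof -
      have "k + 1 - int r \<in> Cset mm k" using r by (simp add: Cset_def)
      then have "garr mm P Q y k (k + 1 - int r) = garr mm P Q y' k (k + 1 - int r)" using eq that by blast
      then show ?thesis using garr_thresh[OF y rc] garr_thresh[OF y' rc] by simp
    qed
    have b: "y (r, c) \<le> N" "y' (r, c) \<le> N" using tabsD(2)[OF y rc] tabsD(2)[OF y' rc] by auto
    have "y' (r, c) \<le> y (r, c)" using key[of "int (y (r, c))"] b by simp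
    moreover have "y (r, c) \<le> y' (r, c)" using key[of "int (y' (r, c))"] b by simp
    ultimately show ?thesis using w by simp
  qed
qed


lemma tabsI:
  assumes "\<And>x. x \<notin> skew_cells mm P Q \<Longrightarrow> y x = 0"
    and "\<And>r c. (r, c) \<in> skew_cells mm P Q \<Longrightarrow> 1 \<le> y (r, c) \<and> y (r, c) \<le> N"
    and "\<And>r c c'. (r, c) \<in> skew_cells mm P Q \<Longrightarrow> (r, c') \<in> skew_cells mm P Q \<Longrightarrow> c < c' \<Longrightarrow> y (r, c) \<le> y (r, c')"
    and "\<And>r r' c. (r, c) \<in> skew_cells mm P Q \<Longrightarrow> (r', c) \<in> skew_cells mm P Q \<Longrightarrow> r < r' \<Longrightarrow> y (r, c) < y (r', c)"
  shows "y \<in> skew_tabs mm N P Q"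
  unfolding skew_tabs_def mem_Collect_eq using assms by blast

definition hq :: "nat \<Rightarrow> (nat \<Rightarrow> nat) \<Rightarrow> nat \<Rightarrow> nat" where
  "hq m Q c = Max (insert 0 {s. 1 \<le> s \<and> s \<le> m \<and> c \<le> Q s})"

locale S65 =
  fixes m n :: nat and P Q :: "nat \<Rightarrow> nat"
  assumes n2: "2 \<le> n" and nm: "n \<le> m"
    and Pdec: "\<forall>r r'. 1 \<le> r \<and> r \<le> r' \<and> r' \<le> m \<longrightarrow> P r' \<le> P r"
    and Qdec: "\<forall>r r'. 1 \<le> r \<and> r \<le> r' \<and> r' \<le> m \<longrightarrow> Q r' \<le> Q r"
    and QP: "\<forall>r. 1 \<le> r \<and> r \<le> m \<longrightarrow> Q r \<le> P r"
    and colc: "\<forall>c. card {r. (r, c) \<in> skew_cells m P Q} \<le> n"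
begin

abbreviation "Lc \<equiv> skew_cells m P Q"
abbreviation "Kc \<equiv> skew_cells (m + n) (ext_P m P) zero_Q"
abbreviation "L \<equiv> skew_tabs m n P Q"
abbreviation "K \<equiv> skew_tabs (m + n) (m + n) (ext_P m P) zero_Q"
abbreviation "EL \<equiv> tab_edge m n P Q"
abbreviation "EK \<equiv> tab_edge (m + n) (m + n) (ext_P m P) zero_Q"

lemma Kc_iff: "(r, c) \<in> Kc \<longleftrightarrow> 1 \<le> r \<and> r \<le> m \<and> 1 \<le> c \<and> c \<le> P r"
  by (auto simp: cells_iff ext_P_def zero_Q_def split: if_splits)

lemma Lc_iff: "(r, c) \<in> Lc \<longleftrightarrow> 1 \<le> r \<and> r \<le> m \<and> Q r < c \<and> c \<le> P r"
  by (simp add: cells_iff)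

lemma hq_fin: "finite (insert 0 {s. 1 \<le> s \<and> s \<le> m \<and> c \<le> Q s})"
  by (rule finite_subset[of _ "{..m}"]) auto

lemma hq_le: "hq m Q c \<le> m"
  unfolding hq_def using hq_fin by (subst Max_le_iff) auto

lemma hq_iff:
  assumes "1 \<le> s" "s \<le> m"
  shows "s \<le> hq m Q c \<longleftrightarrow> c \<le> Q s"
proof
  assume "c \<le> Q s"
  then show "s \<le> hq m Q c" unfolding hq_def using hq_fin assms by (intro Max_ge) auto
next
  assume a: "s \<le> hq m Q c"
  have "hq m Q c \<in> insert 0 {s. 1 \<le> s \<and> s \<le> m \<and> c \<le> Q s}"
    unfolding hq_def using hq_fin by (rule Max_in) simp
  then have h: "1 \<le> hq m Q c \<and> hq m Q c \<le> m \<and> c \<le> Q (hq m Q c)" using a assms by auto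
  then have "Q (hq m Q c) \<le> Q s" using Qdec a assms by blast
  then show "c \<le> Q s" using h by simp
qed

definition psi :: "(nat \<times> nat \<Rightarrow> nat) \<Rightarrow> (nat \<times> nat \<Rightarrow> nat)" where
  "psi x = (\<lambda>(r, c). if 1 \<le> r \<and> r \<le> m \<and> 1 \<le> c \<and> c \<le> Q r then r + m - hq m Q c
     else if (r, c) \<in> Lc then x (r, c) + m else 0)"

lemma psi_Q: "1 \<le> r \<Longrightarrow> r \<le> m \<Longrightarrow> 1 \<le> c \<Longrightarrow> c \<le> Q r \<Longrightarrow> psi x (r, c) = r + m - hq m Q c"
  by (simp add: psi_def)

lemma psi_L: "(r, c) \<in> Lc \<Longrightarrow> psi x (r, c) = x (r, c) + m"
  unfolding psi_def Lc_iff by auto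

lemma Lc_Kc: "(r, c) \<in> Lc \<Longrightarrow> (r, c) \<in> Kc"
  unfolding Lc_iff Kc_iff by auto

lemma Qc_Kc: "1 \<le> r \<Longrightarrow> r \<le> m \<Longrightarrow> 1 \<le> c \<Longrightarrow> c \<le> Q r \<Longrightarrow> (r, c) \<in> Kc"
  unfolding Kc_iff using QP by force

lemma psi_out: "(r, c) \<notin> Kc \<Longrightarrow> psi x (r, c) = 0"
proof -
  assume a: "(r, c) \<notin> Kc"
  then have "\<not> (1 \<le> r \<and> r \<le> m \<and> 1 \<le> c \<and> c \<le> Q r)" using Qc_Kc by blast
  moreover have "(r, c) \<notin> Lc" using a Lc_Kc by blast
  ultimately show ?thesis unfolding psi_def by auto
qed

lemma hq_ge_r: "1 \<le> r \<Longrightarrow> r \<le> m \<Longrightarrow> c \<le> Q r \<Longrightarrow> r \<le> hq m Q c"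
  using hq_iff by blast

lemma psi_Q_le: "1 \<le> r \<Longrightarrow> r \<le> m \<Longrightarrow> 1 \<le> c \<Longrightarrow> c \<le> Q r \<Longrightarrow> 1 \<le> psi x (r, c) \<and> psi x (r, c) \<le> m"
proof -
  assume a: "1 \<le> r" "r \<le> m" "1 \<le> c" "c \<le> Q r"
  have "r \<le> hq m Q c" "hq m Q c \<le> m" using hq_ge_r[OF a(1,2,4)] hq_le by auto
  then show ?thesis unfolding psi_Q[OF a] using a by arith
qed

lemma Kc_cases: "(r, c) \<in> Kc \<Longrightarrow> (1 \<le> c \<and> c \<le> Q r \<and> 1 \<le> r \<and> r \<le> m) \<or> (r, c) \<in> Lc"
  by (auto simp: Kc_iff Lc_iff)

lemma psi_Kc_bounds:
  assumes x: "x \<in> L" and rc: "(r, c) \<in> Kc"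
  shows "1 \<le> psi x (r, c) \<and> psi x (r, c) \<le> m + n"
proof (cases "(r, c) \<in> Lc")
  case True
  then show ?thesis using psi_L[OF True] tabsD(2)[OF x True] by simp
next
  case False
  then have "1 \<le> c \<and> c \<le> Q r \<and> 1 \<le> r \<and> r \<le> m" using Kc_cases[OF rc] by blast
  then show ?thesis using psi_Q_le[of r c x] by simp
qed

lemma psi_Lc_gt: "x \<in> L \<Longrightarrow> (r, c) \<in> Lc \<Longrightarrow> m < psi x (r, c)"
  using psi_L tabsD(2) by fastforce

lemma psi_in_K:
  assumes x: "x \<in> L"
  shows "psi x \<in> K"
proof (rule tabsI)
  fix w assume "w \<notin> Kc" then show "psi x w = 0" using psi_out by (cases w) auto
next
  fix r c assume rc: "(r, c) \<in> Kc"
  show "1 \<le> psi x (r, c) \<and> psi x (r, c) \<le> m + n" by (rule psi_Kc_bounds[OF x rc])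
next
  fix r c c' assume rc: "(r, c) \<in> Kc" and rc': "(r, c') \<in> Kc" and cc: "c < c'"
  show "psi x (r, c) \<le> psi x (r, c')"
  proof (cases "(r, c') \<in> Lc")
    case True
    note T = True
    show ?thesis
    proof (cases "(r, c) \<in> Lc")
      case True
      then show ?thesis using psi_L[OF T] psi_L[OF True] tabsD(3)[OF x True T cc] by simp
    next
      case False
      then have "1 \<le> c \<and> c \<le> Q r \<and> 1 \<le> r \<and> r \<le> m" using Kc_cases[OF rc] by blast
      then have "psi x (r, c) \<le> m" using psi_Q_le[of r c x] by simp
      then show ?thesis using psi_Lc_gt[OF x T] by simp
    qed
  next
    case False
    then have c': "1 \<le> c' \<and> c' \<le> Q r \<and> 1 \<le> r \<and> r \<le> m" using Kc_cases[OF rc'] by blast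
    have c: "1 \<le> c \<and> c \<le> Q r" using c' cc rc by (auto simp: Kc_iff)
    have "hq m Q c' \<le> hq m Q c"
    proof (cases "hq m Q c' = 0")
      case False
      then have "c' \<le> Q (hq m Q c')" using hq_iff[of "hq m Q c'" c'] hq_le by simp
      then show ?thesis using hq_iff[of "hq m Q c'" c] hq_le False cc by simp
    qed simp
    then show ?thesis using psi_Q c c' by simp
  qed
next
  fix r r' c assume rc: "(r, c) \<in> Kc" and rc': "(r', c) \<in> Kc" and rr: "r < r'"
  show "psi x (r, c) < psi x (r', c)"
  proof (cases "(r, c) \<in> Lc")
    case True
    then have r1: "1 \<le> r" "Q r < c" by (auto simp: Lc_iff)
    have r2: "r' \<le> m" "c \<le> P r'" using rc' by (auto simp: Kc_iff)
    have "Q r' \<le> Q r" using Qdec r1 r2 rr by simp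
    then have "(r', c) \<in> Lc" using r1 r2 rr by (auto simp: Lc_iff)
    then show ?thesis using psi_L[OF True] psi_L[OF \<open>(r', c) \<in> Lc\<close>] tabsD(4)[OF x True _ rr] by simp
  next
    case False
    then have a: "1 \<le> c \<and> c \<le> Q r \<and> 1 \<le> r \<and> r \<le> m" using Kc_cases[OF rc] by blast
    show ?thesis
    proof (cases "(r', c) \<in> Lc")
      case True
      then show ?thesis using psi_Q_le[of r c x] a psi_Lc_gt[OF x True] by simp
    next
      case False
      then have b: "1 \<le> c \<and> c \<le> Q r' \<and> 1 \<le> r' \<and> r' \<le> m" using Kc_cases[OF rc'] by blast
      have "r' \<le> hq m Q c" using hq_ge_r b by blast
      then show ?thesis using psi_Q a b rr hq_le[of c] by simp
    qed
  qed
qed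

lemma garr_psi:
  assumes x: "x \<in> L" and k: "0 \<le> k" "k \<le> int (m + n)" and l: "l \<in> Cset (m + n) k"
  shows "garr (m + n) (ext_P m P) zero_Q (psi x) k l = phi_arr m (garr m P Q x) k l"
proof -
  define r where "r = nat (k + 1 - l)"
  have r: "1 \<le> r" "r \<le> m + n" and lr: "l = k + 1 - int r"
    using l k unfolding r_def Cset_def by auto
  define SK where "SK = {c. (r, c) \<in> Kc \<and> int (psi x (r, c)) \<le> k}"
  have gK: "garr (m + n) (ext_P m P) zero_Q (psi x) k l = int (card SK)"
    unfolding lr SK_def using garr_row[OF r, of "ext_P m P" zero_Q "psi x" k] by (simp add: zero_Q_def)
  show ?thesis
  proof (cases "r \<le> m")
    case False
    then have "SK = {}" unfolding SK_def by (auto simp: Kc_iff)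
    moreover have "phi_arr m (garr m P Q x) k l = 0"
      using False lr k unfolding phi_arr_def by auto
    ultimately show ?thesis using gK by simp
  next
    case rm: True
    show ?thesis
    proof (cases "int m \<le> k")
      case True
      define SL where "SL = {c. (r, c) \<in> Lc \<and> int (x (r, c)) \<le> k - int m}"
      have "SK = {1..Q r} \<union> SL"
      proof (rule set_eqI)
        fix c
        show "c \<in> SK \<longleftrightarrow> c \<in> {1..Q r} \<union> SL"
        proof
          assume "c \<in> SK"
          then have c: "(r, c) \<in> Kc" "int (psi x (r, c)) \<le> k" unfolding SK_def by auto
          show "c \<in> {1..Q r} \<union> SL"
          proof (cases "(r, c) \<in> Lc")
            case True
            then show ?thesis using c psi_L[OF True] unfolding SL_def by simp
          next
            case False
            then show ?thesis using Kc_cases[OF c(1)] by auto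
          qed
        next
          assume c: "c \<in> {1..Q r} \<union> SL"
          show "c \<in> SK"
          proof (cases "c \<in> SL")
            case True
            then have "(r, c) \<in> Lc" unfolding SL_def by simp
            then show ?thesis using True Lc_Kc psi_L unfolding SL_def SK_def by simp
          next
            case False
            then have cc: "1 \<le> c" "c \<le> Q r" using c by auto
            have "psi x (r, c) \<le> m" using psi_Q_le[OF r(1) rm cc] by simp
            then show ?thesis using True Qc_Kc[OF r(1) rm cc] unfolding SK_def by simp
          qed
        qed
      qed
      moreover have "{1..Q r} \<inter> SL = {}" unfolding SL_def by (auto simp: Lc_iff)
      moreover have "finite SL" unfolding SL_def by (rule row_finite)
      ultimately have cK: "card SK = Q r + card SL" by (simp add: card_Un_disjoint)
      have "phi_arr m (garr m P Q x) k l = garr m P Q x (k - int m) (l - int m)"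
        using True lr r rm unfolding phi_arr_def by auto
      also have "l - int m = (k - int m) + 1 - int r" using lr by simp
      also have "garr m P Q x (k - int m) ((k - int m) + 1 - int r) = int (Q r) + int (card SL)"
        using garr_row[OF r(1) rm, of P Q x "k - int m"] unfolding SL_def by simp
      finally show ?thesis using gK cK by simp
    next
      case False
      show ?thesis
      proof (cases "k < int r")
        case True
        have "SK = {}"
        proof -
          have "\<not> int (psi x (r, c)) \<le> k" if "(r, c) \<in> Kc" for c
          proof (cases "(r, c) \<in> Lc")
            case True
            then show ?thesis using psi_Lc_gt[OF x True] False by simp
          next
            case F: False
            then have cc: "1 \<le> c" "c \<le> Q r" using Kc_cases[OF that] by auto
            have "r + m - hq m Q c \<ge> r" using hq_le[of c] by simp
            then show ?thesis using psi_Q[OF r(1) rm cc] True by simp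
          qed
          then show ?thesis unfolding SK_def by auto
        qed
        moreover have "phi_arr m (garr m P Q x) k l = 0"
          using True lr unfolding phi_arr_def by auto
        ultimately show ?thesis using gK by simp
      next
        case kr: False
        define s where "s = r + m - nat k"
        have s: "1 \<le> s" "s \<le> m" "r < s" using kr False rm unfolding s_def by auto
        have Qs: "Q s \<le> Q r" using Qdec s r by simp
        have "SK = {1..Q s}"
        proof (rule set_eqI)
          fix c
          show "c \<in> SK \<longleftrightarrow> c \<in> {1..Q s}"
          proof
            assume "c \<in> SK"
            then have c: "(r, c) \<in> Kc" "int (psi x (r, c)) \<le> k" unfolding SK_def by auto
            have nL: "(r, c) \<notin> Lc" using psi_Lc_gt[OF x] c False by force
            then have cc: "1 \<le> c" "c \<le> Q r" using Kc_cases[OF c(1)] by auto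
            have "r + m - hq m Q c \<le> k" using c(2) psi_Q[OF r(1) rm cc] by simp
            then have "s \<le> hq m Q c" unfolding s_def using kr k by linarith
            then show "c \<in> {1..Q s}" using hq_iff[OF s(1,2)] cc by simp
          next
            assume c: "c \<in> {1..Q s}"
            then have cc: "1 \<le> c" "c \<le> Q r" using Qs by auto
            have "s \<le> hq m Q c" using hq_iff[OF s(1,2)] c by simp
            then have "r + m - hq m Q c \<le> k" unfolding s_def using kr k by linarith
            then show "c \<in> SK" unfolding SK_def using Qc_Kc[OF r(1) rm cc] psi_Q[OF r(1) rm cc] by simp
          qed
        qed
        then have cK: "card SK = Q s" by simp
        have "phi_arr m (garr m P Q x) k l = garr m P Q x 0 (l - int m)"
          using False kr lr r rm unfolding phi_arr_def by auto
        also have "l - int m = 0 + 1 - int s" using lr kr k False unfolding s_def by linarith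
        also have "garr m P Q x 0 (0 + 1 - int s) = int (Q s) + int (card {c. (s, c) \<in> Lc \<and> int (x (s, c)) \<le> 0})"
          by (rule garr_row[OF s(1,2)])
        also have "{c. (s, c) \<in> Lc \<and> int (x (s, c)) \<le> 0} = {}"
          using tabsD(2)[OF x] by force
        finally show ?thesis using gK cK by simp
      qed
    qed
  qed
qed

lemma psi_L': "w \<in> Lc \<Longrightarrow> psi x w = x w + m"
  using psi_L by (cases w) auto

lemma psi_Q': "w \<in> Kc \<Longrightarrow> w \<notin> Lc \<Longrightarrow> psi x w = psi y w"
proof (cases w)
  case (Pair r c)
  assume "w \<in> Kc" "w \<notin> Lc"
  then have "1 \<le> c \<and> c \<le> Q r \<and> 1 \<le> r \<and> r \<le> m" using Kc_cases Pair by blast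
  then show ?thesis using psi_Q Pair by simp
qed

lemma psi_Q_le': "w \<in> Kc \<Longrightarrow> w \<notin> Lc \<Longrightarrow> psi x w \<le> m"
proof (cases w)
  case (Pair r c)
  assume "w \<in> Kc" "w \<notin> Lc"
  then have "1 \<le> c \<and> c \<le> Q r \<and> 1 \<le> r \<and> r \<le> m" using Kc_cases Pair by blast
  then show ?thesis using psi_Q_le Pair by simp
qed

lemma Lc_Kc': "w \<in> Lc \<Longrightarrow> w \<in> Kc"
  using Lc_Kc by (cases w) auto

lemma phi_eq:
  assumes x: "x \<in> L"
  shows "phi m n P Q x = psi x"
  unfolding phi_def
proof (rule the_equality)
  show "psi x \<in> K \<and> (\<forall>k\<in>{0..int (m + n)}. \<forall>l\<in>Cset (m + n) k.
      garr (m + n) (ext_P m P) zero_Q (psi x) k l = phi_arr m (garr m P Q x) k l)"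
    using psi_in_K[OF x] garr_psi[OF x] by auto
next
  fix y
  assume y: "y \<in> K \<and> (\<forall>k\<in>{0..int (m + n)}. \<forall>l\<in>Cset (m + n) k.
      garr (m + n) (ext_P m P) zero_Q y k l = phi_arr m (garr m P Q x) k l)"
  show "y = psi x"
    by (rule garr_determines[of y "m + n" "m + n" "ext_P m P" zero_Q "psi x"])
      (use y psi_in_K[OF x] garr_psi[OF x] in auto)
qed

lemma psi_inj: "inj_on psi L"
proof (rule inj_onI)
  fix S T assume S: "S \<in> L" and T: "T \<in> L" and eq: "psi S = psi T"
  show "S = T"
  proof
    fix w
    show "S w = T w"
    proof (cases "w \<in> Lc")
      case True
      then show ?thesis using eq psi_L'[OF True, of S] psi_L'[OF True, of T] by simp
    next
      case False
      then show ?thesis using tabsD(1)[OF S] tabsD(1)[OF T] by simp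
    qed
  qed
qed

lemma edge_mem: "tab_edge mm N P' Q' S i T \<Longrightarrow> S \<in> skew_tabs mm N P' Q' \<and> T \<in> skew_tabs mm N P' Q'"
  unfolding tab_edge_def by blast

lemma edge_iff:
  assumes S: "S \<in> L" and T: "T \<in> L"
  shows "EL S i T \<longleftrightarrow> EK (psi S) (i + m) (psi T)"
proof
  assume "EL S i T"
  then obtain z where z: "z \<in> Lc" "S z = T z + 1" "T z = i" and o: "\<forall>y\<in>Lc. y \<noteq> z \<longrightarrow> S y = T y"
    unfolding tab_edge_def by blast
  have "\<forall>w\<in>Kc. w \<noteq> z \<longrightarrow> psi S w = psi T w"
  proof (intro ballI impI)
    fix w assume w: "w \<in> Kc" "w \<noteq> z"
    show "psi S w = psi T w"
    proof (cases "w \<in> Lc")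
      case True then show ?thesis using o w psi_L' by simp
    next
      case False then show ?thesis using psi_Q' w by blast
    qed
  qed
  then show "EK (psi S) (i + m) (psi T)"
    unfolding tab_edge_def using psi_in_K[OF S] psi_in_K[OF T] Lc_Kc'[OF z(1)] z psi_L'[OF z(1)]
    by (intro conjI bexI[of _ z]) auto
next
  assume "EK (psi S) (i + m) (psi T)"
  then obtain z where z: "z \<in> Kc" "psi S z = psi T z + 1" "psi T z = i + m"
    and o: "\<forall>y\<in>Kc. y \<noteq> z \<longrightarrow> psi S y = psi T y"
    unfolding tab_edge_def by blast
  have zL: "z \<in> Lc" using psi_Q'[OF z(1), of S T] z(2) by (cases "z \<in> Lc") auto
  have "\<forall>y\<in>Lc. y \<noteq> z \<longrightarrow> S y = T y"
    using o psi_L' Lc_Kc' by fastforce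
  then show "EL S i T"
    unfolding tab_edge_def using S T zL z psi_L'[OF zL] by (intro conjI bexI[of _ z]) auto
qed

lemma lift:
  assumes y': "y' \<in> K" and x: "x \<in> L"
    and eqQ: "\<forall>w \<in> Kc - Lc. y' w = psi x w" and gt: "\<forall>w \<in> Lc. m < y' w"
  shows "y' \<in> psi ` L"
proof -
  define y where "y = (\<lambda>w. if w \<in> Lc then y' w - m else 0)"
  have yL: "y \<in> L"
  proof (rule tabsI)
    fix w assume "w \<notin> Lc" then show "y w = 0" unfolding y_def by simp
  next
    fix r c assume rc: "(r, c) \<in> Lc"
    then show "1 \<le> y (r, c) \<and> y (r, c) \<le> n"
      using gt tabsD(2)[OF y' Lc_Kc[OF rc]] unfolding y_def by force
  next
    fix r c c' assume rc: "(r, c) \<in> Lc" and rc': "(r, c') \<in> Lc" and cc: "c < c'"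
    then show "y (r, c) \<le> y (r, c')"
      using tabsD(3)[OF y' Lc_Kc[OF rc] Lc_Kc[OF rc'] cc] unfolding y_def by simp
  next
    fix r r' c assume rc: "(r, c) \<in> Lc" and rc': "(r', c) \<in> Lc" and rr: "r < r'"
    then show "y (r, c) < y (r', c)"
      using tabsD(4)[OF y' Lc_Kc[OF rc] Lc_Kc[OF rc'] rr] gt unfolding y_def by force
  qed
  have "psi y = y'"
  proof
    fix w
    show "psi y w = y' w"
    proof (cases "w \<in> Kc")
      case False
      then show ?thesis using psi_out tabsD(1)[OF y'] by (cases w) auto
    next
      case True
      show ?thesis
      proof (cases "w \<in> Lc")
        case True
        have "psi y w = y w + m" by (rule psi_L'[OF True])
        moreover have "y w = y' w - m" using True unfolding y_def by simp
        moreover have "m < y' w" using gt True by blast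
        ultimately show ?thesis by simp
      next
        case False
        then show ?thesis using eqQ psi_Q'[OF True False, of y x] True by simp
      qed
    qed
  qed
  then show ?thesis using yL by blast
qed

lemma closure_fwd:
  assumes x: "x \<in> L" and e: "EK (psi x) c y'" and c: "m < c"
  shows "y' \<in> psi ` L"
proof -
  from e obtain z where y': "y' \<in> K" and z: "z \<in> Kc" "psi x z = y' z + 1" "y' z = c"
    and o: "\<forall>w\<in>Kc. w \<noteq> z \<longrightarrow> psi x w = y' w"
    unfolding tab_edge_def by blast
  have zL: "z \<in> Lc" using psi_Q_le'[OF z(1), of x] z c by (cases "z \<in> Lc") auto
  show ?thesis
  proof (rule lift[OF y' x])
    show "\<forall>w\<in>Kc - Lc. y' w = psi x w" using o zL by auto
    show "\<forall>w\<in>Lc. m < y' w"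
    proof
      fix w assume w: "w \<in> Lc"
      show "m < y' w"
      proof (cases "w = z")
        case True then show ?thesis using z c by simp
      next
        case False then show ?thesis using o Lc_Kc'[OF w] psi_L'[OF w, of x] tabsD(2)[OF x] w
          by (cases w) force
      qed
    qed
  qed
qed

lemma closure_bwd:
  assumes x: "x \<in> L" and e: "EK y' c (psi x)" and c: "m < c"
  shows "y' \<in> psi ` L"
proof -
  from e obtain z where y': "y' \<in> K" and z: "z \<in> Kc" "y' z = psi x z + 1" "psi x z = c"
    and o: "\<forall>w\<in>Kc. w \<noteq> z \<longrightarrow> y' w = psi x w"
    unfolding tab_edge_def by blast
  have zL: "z \<in> Lc" using psi_Q_le'[OF z(1), of x] z c by (cases "z \<in> Lc") auto
  show ?thesis
  proof (rule lift[OF y' x])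
    show "\<forall>w\<in>Kc - Lc. y' w = psi x w" using o zL by auto
    show "\<forall>w\<in>Lc. m < y' w"
    proof
      fix w assume w: "w \<in> Lc"
      show "m < y' w"
      proof (cases "w = z")
        case True then show ?thesis using z c by simp
      next
        case False then show ?thesis using o Lc_Kc'[OF w] psi_L'[OF w, of x] tabsD(2)[OF x] w
          by (cases w) force
      qed
    qed
  qed
qed

end

context S65 begin
definition top :: "nat \<Rightarrow> nat" where "top c = (LEAST r. (r, c) \<in> Lc)"

definition Mx :: "nat \<times> nat \<Rightarrow> nat" where
  "Mx = (\<lambda>(r, c). if (r, c) \<in> Lc then r + 1 - top c else 0)"

lemma top_in: "(r, c) \<in> Lc \<Longrightarrow> (top c, c) \<in> Lc \<and> top c \<le> r"
  unfolding top_def by (metis (mono_tags, lifting) LeastI Least_le)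

lemma top_le: "(r, c) \<in> Lc \<Longrightarrow> top c \<le> r"
  unfolding top_def by (rule Least_le)

lemma col_interval:
  assumes rc: "(r, c) \<in> Lc" and a: "top c \<le> r'" "r' \<le> r"
  shows "(r', c) \<in> Lc"
proof -
  have t: "(top c, c) \<in> Lc" using top_in[OF rc] by blast
  then have t': "1 \<le> top c" "Q (top c) < c" by (auto simp: Lc_iff)
  have r: "r \<le> m" "c \<le> P r" using rc by (auto simp: Lc_iff)
  have "Q r' \<le> Q (top c)" using Qdec t' a r by (meson le_trans)
  moreover have "P r \<le> P r'" using Pdec t' a r by (meson le_trans)
  ultimately show ?thesis using t' a r unfolding Lc_iff by simp
qed

lemma Lc_fin: "finite Lc"
  by (rule finite_subset[of _ "Sigma {1..m} (\<lambda>r. {..P r})"]) (auto simp: Lc_iff)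

lemma Mx_L: "Mx \<in> L"
proof (rule tabsI)
  fix w assume "w \<notin> Lc" then show "Mx w = 0" unfolding Mx_def by (cases w) auto
next
  fix r c assume rc: "(r, c) \<in> Lc"
  have t: "top c \<le> r" using top_le[OF rc] .
  have "{top c..r} \<subseteq> {r'. (r', c) \<in> Lc}" using col_interval[OF rc] by auto
  moreover have "finite {r'. (r', c) \<in> Lc}"
    by (rule finite_subset[of _ "{..m}"]) (auto simp: Lc_iff)
  ultimately have "card {top c..r} \<le> card {r'. (r', c) \<in> Lc}" by (rule card_mono[rotated])
  moreover have "card {r'. (r', c) \<in> Lc} \<le> n" using colc by blast
  ultimately have "r + 1 - top c \<le> n" using t by simp
  then show "1 \<le> Mx (r, c) \<and> Mx (r, c) \<le> n" using rc t unfolding Mx_def by simp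
next
  fix r c c' assume rc: "(r, c) \<in> Lc" and rc': "(r, c') \<in> Lc" and cc: "c < c'"
  have t: "top c \<le> r" "(top c, c) \<in> Lc" using top_in[OF rc] by auto
  have "(top c, c') \<in> Lc"
  proof -
    have "1 \<le> top c" "Q (top c) < c" using t by (auto simp: Lc_iff)
    moreover have "r \<le> m" "c' \<le> P r" using rc' by (auto simp: Lc_iff)
    moreover have "P r \<le> P (top c)" using Pdec t(1) \<open>r \<le> m\<close> \<open>1 \<le> top c\<close> by blast
    moreover have "top c \<le> m" using t(1) \<open>r \<le> m\<close> by simp
    ultimately show ?thesis using cc unfolding Lc_iff by simp
  qed
  then have "top c' \<le> top c" by (rule top_le)
  then show "Mx (r, c) \<le> Mx (r, c')" using rc rc' t unfolding Mx_def by simp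
next
  fix r r' c assume rc: "(r, c) \<in> Lc" and rc': "(r', c) \<in> Lc" and rr: "r < r'"
  then show "Mx (r, c) < Mx (r', c)" using top_le[OF rc] unfolding Mx_def by simp
qed

lemma Mx_min:
  assumes x: "x \<in> L"
  shows "(r, c) \<in> Lc \<Longrightarrow> Mx (r, c) \<le> x (r, c)"
proof (induction r)
  case 0 then show ?case by (simp add: Lc_iff)
next
  case (Suc r)
  show ?case
  proof (cases "Suc r = top c")
    case True
    then show ?thesis using Suc.prems tabsD(2)[OF x Suc.prems] unfolding Mx_def by simp
  next
    case False
    then have t: "top c \<le> r" using top_le[OF Suc.prems] by simp
    then have rc: "(r, c) \<in> Lc" using col_interval[OF Suc.prems t] by simp
    have "Mx (r, c) \<le> x (r, c)" using Suc.IH[OF rc] .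
    moreover have "x (r, c) < x (Suc r, c)" using tabsD(4)[OF x rc Suc.prems] by simp
    ultimately show ?thesis using Suc.prems rc t unfolding Mx_def by simp
  qed
qed

lemma Mx_min': "x \<in> L \<Longrightarrow> w \<in> Lc \<Longrightarrow> Mx w \<le> x w"
  using Mx_min by (cases w) auto

lemma tab_max_eq: "tab_max m n P Q = Mx"
  unfolding tab_max_def
proof (rule the_equality)
  show "Mx \<in> L \<and> (\<forall>x\<in>L. tab_le m P Q x Mx)"
    using Mx_L Mx_min' unfolding tab_le_def by blast
next
  fix M assume M: "M \<in> L \<and> (\<forall>x\<in>L. tab_le m P Q x M)"
  show "M = Mx"
  proof
    fix w
    show "M w = Mx w"
    proof (cases "w \<in> Lc")
      case True
      have "M w \<le> Mx w" using M Mx_L True unfolding tab_le_def by blast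
      moreover have "Mx w \<le> M w" using Mx_min'[OF _ True] M by blast
      ultimately show ?thesis by simp
    next
      case False
      then show ?thesis using tabsD(1)[OF Mx_L] tabsD(1) M by metis
    qed
  qed
qed

lemma step_down:
  assumes x: "x \<in> L" and ne: "x \<noteq> Mx"
  shows "\<exists>x' \<in> L. \<exists>v. 1 \<le> v \<and> v < n \<and> EL x v x' \<and> sum x' Lc < sum x Lc"
proof -
  have "\<exists>w \<in> Lc. Mx w < x w"
  proof (rule ccontr)
    assume "\<not> ?thesis"
    then have "\<forall>w. x w = Mx w"
      using Mx_min'[OF x] tabsD(1)[OF x] tabsD(1)[OF Mx_L] by (metis le_antisym not_le)
    then show False using ne by auto
  qed
  then have ex: "\<exists>v. \<exists>w \<in> Lc. Mx w < x w \<and> x w = v" by blast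
  define v where "v = (LEAST v. \<exists>w \<in> Lc. Mx w < x w \<and> x w = v)"
  have vmin: "\<And>w. w \<in> Lc \<Longrightarrow> Mx w < x w \<Longrightarrow> v \<le> x w"
    unfolding v_def by (rule Least_le) blast
  have "\<exists>w \<in> Lc. Mx w < x w \<and> x w = v" unfolding v_def using LeastI_ex[OF ex] .
  then have ex2: "\<exists>c r. (r, c) \<in> Lc \<and> Mx (r, c) < x (r, c) \<and> x (r, c) = v" by auto
  define c0 where "c0 = (LEAST c. \<exists>r. (r, c) \<in> Lc \<and> Mx (r, c) < x (r, c) \<and> x (r, c) = v)"
  have cmin: "\<And>r c. (r, c) \<in> Lc \<Longrightarrow> Mx (r, c) < x (r, c) \<Longrightarrow> x (r, c) = v \<Longrightarrow> c0 \<le> c"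
    unfolding c0_def by (rule Least_le) blast
  obtain r0 where z: "(r0, c0) \<in> Lc" "Mx (r0, c0) < x (r0, c0)" "x (r0, c0) = v"
    using LeastI_ex[OF ex2] unfolding c0_def[symmetric] by blast
  define z where "z = (r0, c0)"
  have Mz: "1 \<le> Mx z" using tabsD(2)[OF Mx_L z(1)] z_def by simp
  have v2: "2 \<le> v" using Mz z z_def by simp
  have vn: "v \<le> n" using tabsD(2)[OF x z(1)] z by simp
  define x' where "x' = x(z := v - 1)"
  have x'L: "x' \<in> L"
  proof (rule tabsI)
    fix w assume "w \<notin> Lc" then show "x' w = 0" using z(1) tabsD(1)[OF x] unfolding x'_def z_def by auto
  next
    fix r c assume rc: "(r, c) \<in> Lc"
    show "1 \<le> x' (r, c) \<and> x' (r, c) \<le> n" using tabsD(2)[OF x rc] v2 vn unfolding x'_def by auto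
  next
    fix r c c' assume rc: "(r, c) \<in> Lc" and rc': "(r, c') \<in> Lc" and cc: "c < c'"
    have base: "x (r, c) \<le> x (r, c')" using tabsD(3)[OF x rc rc' cc] .
    show "x' (r, c) \<le> x' (r, c')"
    proof (cases "(r, c') = z")
      case True
      then have rr: "r = r0" "c' = c0" unfolding z_def by auto
      have "x (r, c) \<noteq> v"
      proof
        assume xv: "x (r, c) = v"
        have "Mx (r, c) \<le> Mx (r, c')" using tabsD(3)[OF Mx_L rc rc' cc] .
        then have "Mx (r, c) < x (r, c)" using z xv rr by simp
        then have "c0 \<le> c" using cmin[OF rc _ xv] by simp
        then show False using cc rr by simp
      qed
      then have "x (r, c) \<le> v - 1" using base z rr by simp
      then show ?thesis using True cc unfolding x'_def by auto
    next
      case False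
      then show ?thesis using base z unfolding x'_def z_def by auto
    qed
  next
    fix r r' c assume rc: "(r, c) \<in> Lc" and rc': "(r', c) \<in> Lc" and rr: "r < r'"
    have base: "x (r, c) < x (r', c)" using tabsD(4)[OF x rc rc' rr] .
    show "x' (r, c) < x' (r', c)"
    proof (cases "(r', c) = z")
      case True
      then have rr': "r' = r0" "c = c0" unfolding z_def by auto
      have "x (r, c) \<noteq> v - 1"
      proof
        assume xv: "x (r, c) = v - 1"
        have "Mx (r, c) < Mx (r', c)" using tabsD(4)[OF Mx_L rc rc' rr] .
        then have "Mx (r, c) < x (r, c)" using z xv rr' by simp
        then have "v \<le> x (r, c)" using vmin[OF rc] by simp
        then show False using xv v2 by simp
      qed
      then have "x (r, c) < v - 1" using base z rr' by simp
      then show ?thesis using True rr unfolding x'_def by auto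
    next
      case False
      then show ?thesis using base z unfolding x'_def z_def by auto
    qed
  qed
  have zL: "z \<in> Lc" using z(1) z_def by simp
  have e: "EL x (v - 1) x'"
    unfolding tab_edge_def using x x'L zL z v2 unfolding x'_def z_def
    by (intro conjI bexI[of _ "(r0, c0)"]) auto
  have "sum x' Lc < sum x Lc"
  proof (rule sum_strict_mono_ex1[OF Lc_fin])
    show "\<forall>w\<in>Lc. x' w \<le> x w" unfolding x'_def using z z_def by auto
    show "\<exists>w\<in>Lc. x' w < x w" using zL z v2 unfolding x'_def z_def by (intro bexI[of _ "(r0, c0)"]) auto
  qed
  then show ?thesis using x'L e v2 vn by (intro bexI[of _ x'] exI[of _ "v - 1"]) auto
qed

abbreviation "J \<equiv> {m + 1 .. m + n - 1}"

lemma connected: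
  "x \<in> L \<Longrightarrow> (col_adj EK J)\<^sup>*\<^sup>* (psi Mx) (psi x)"
proof (induction "sum x Lc" arbitrary: x rule: less_induct)
  case less
  show ?case
  proof (cases "x = Mx")
    case True then show ?thesis by (metis rtranclp.rtrancl_refl)
  next
    case False
    obtain x' v where x': "x' \<in> L" "1 \<le> v" "v < n" "EL x v x'" "sum x' Lc < sum x Lc"
      using step_down[OF less.prems False] by blast
    have IH: "(col_adj EK J)\<^sup>*\<^sup>* (psi Mx) (psi x')" using less.hyps[OF x'(5) x'(1)] .
    have "EK (psi x) (v + m) (psi x')" using edge_iff[OF less.prems x'(1)] x'(4) by blast
    then have "col_adj EK J (psi x') (psi x)" unfolding col_adj_def using x'(2,3)
      by (intro bexI[of _ "v + m"]) auto
    then show ?thesis using IH by (rule rtranclp.rtrancl_into_rtrancl[rotated])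
  qed
qed

lemma comp_eq: "psi ` L = component EK J (psi Mx)"
proof
  show "psi ` L \<subseteq> component EK J (psi Mx)" using connected unfolding component_def by auto
next
  show "component EK J (psi Mx) \<subseteq> psi ` L"
  proof
    fix s assume "s \<in> component EK J (psi Mx)"
    then have "(col_adj EK J)\<^sup>*\<^sup>* (psi Mx) s" unfolding component_def by simp
    then show "s \<in> psi ` L"
    proof (induction rule: rtranclp_induct)
      case base then show ?case using Mx_L by blast
    next
      case (step b c)
      then obtain y where y: "y \<in> L" "b = psi y" by blast
      from step.hyps(2) obtain i where i: "i \<in> J" "EK b i c \<or> EK c i b" unfolding col_adj_def by blast
      then show ?case using closure_fwd[OF y(1)] closure_bwd[OF y(1)] y(2) by auto
    qed
  qed
qed

end

context S65 begin

lemma path_mem: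
  assumes p: "col_path E i ys" and e: "\<forall>a b. E a i b \<longrightarrow> a \<in> A \<and> b \<in> A" and h: "hd ys \<in> A \<or> last ys \<in> A"
  shows "set ys \<subseteq> A"
proof
  fix y assume "y \<in> set ys"
  then obtain k where k: "k < length ys" "ys ! k = y" by (auto simp: in_set_conv_nth)
  have ne: "ys \<noteq> []" using p unfolding col_path_def by simp
  show "y \<in> A"
  proof (cases "Suc k < length ys")
    case True
    then show ?thesis using p e k unfolding col_path_def by blast
  next
    case False
    then have kl: "k = length ys - 1" using k by simp
    show ?thesis
    proof (cases k)
      case 0
      then have "length ys = 1" using kl k by simp
      then have "hd ys = y" "last ys = y" using k 0 ne by (auto simp: hd_conv_nth last_conv_nth)
      then show ?thesis using h by auto
    next
      case (Suc k')
      have "Suc k' < length ys" using k Suc by simp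
      then have "E (ys ! k') i (ys ! Suc k')" using p unfolding col_path_def by blast
      then show ?thesis using e k Suc by blast
    qed
  qed
qed

lemma EL_mem: "\<forall>a b. EL a i b \<longrightarrow> a \<in> L \<and> b \<in> L"
  using edge_mem by blast

lemma map_fwd:
  assumes p: "col_path EL i ys" and s: "set ys \<subseteq> L"
  shows "col_path EK (i + m) (map psi ys)"
  unfolding col_path_def
proof (intro conjI allI impI)
  show "map psi ys \<noteq> []" using p unfolding col_path_def by simp
next
  fix k assume k: "Suc k < length (map psi ys)"
  then have e: "EL (ys ! k) i (ys ! Suc k)" using p unfolding col_path_def by simp
  have "ys ! k \<in> L" "ys ! Suc k \<in> L" using s k by auto
  then show "EK (map psi ys ! k) (i + m) (map psi ys ! Suc k)" using edge_iff e k by simp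
qed

lemma map_bwd:
  assumes p: "col_path EK (i + m) xs" and s: "set xs \<subseteq> psi ` L"
  shows "\<exists>ys. xs = map psi ys \<and> set ys \<subseteq> L \<and> col_path EL i ys"
proof -
  define ys where "ys = map (inv_into L psi) xs"
  have xs: "xs = map psi ys" unfolding ys_def using s by (auto simp: f_inv_into_f intro!: map_idI[symmetric])
  have sL: "set ys \<subseteq> L" unfolding ys_def using s by (auto intro: inv_into_into)
  have "col_path EL i ys"
    unfolding col_path_def
  proof (intro conjI allI impI)
    show "ys \<noteq> []" using p unfolding col_path_def ys_def by simp
  next
    fix k assume k: "Suc k < length ys"
    have "EK (xs ! k) (i + m) (xs ! Suc k)" using p k unfolding col_path_def ys_def by simp
    then have "EK (psi (ys ! k)) (i + m) (psi (ys ! Suc k))" using xs k by simp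
    moreover have "ys ! k \<in> L" "ys ! Suc k \<in> L" using sL k by auto
    ultimately show "EL (ys ! k) i (ys ! Suc k)" using edge_iff by blast
  qed
  then show ?thesis using xs sL by blast
qed

lemma propagate:
  assumes p: "col_path EK c xs" and c: "m < c" and h: "xs ! 0 \<in> psi ` L \<or> last xs \<in> psi ` L"
  shows "set xs \<subseteq> psi ` L"
proof -
  have ne: "xs \<noteq> []" using p unfolding col_path_def by simp
  have st: "xs ! k \<in> psi ` L \<longleftrightarrow> xs ! Suc k \<in> psi ` L" if k: "Suc k < length xs" for k
  proof
    assume "xs ! k \<in> psi ` L"
    then obtain y where y: "y \<in> L" "xs ! k = psi y" by blast
    have "EK (xs ! k) c (xs ! Suc k)" using p k unfolding col_path_def by simp
    then show "xs ! Suc k \<in> psi ` L" using closure_fwd[OF y(1) _ c] y by simp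
  next
    assume "xs ! Suc k \<in> psi ` L"
    then obtain y where y: "y \<in> L" "xs ! Suc k = psi y" by blast
    have "EK (xs ! k) c (xs ! Suc k)" using p k unfolding col_path_def by simp
    then show "xs ! k \<in> psi ` L" using closure_bwd[OF y(1) _ c] y by simp
  qed
  have all: "k < length xs \<Longrightarrow> (xs ! k \<in> psi ` L \<longleftrightarrow> xs ! 0 \<in> psi ` L)" for k
  proof (induction k)
    case 0 then show ?case by simp
  next
    case (Suc k) then show ?case using st[of k] by simp
  qed
  have "xs ! 0 \<in> psi ` L"
    using h all[of "length xs - 1"] ne by (auto simp: last_conv_nth)
  then show ?thesis using all by (auto simp: in_set_conv_nth)
qed

lemma compL_sub: "x \<in> L \<Longrightarrow> component EL I x \<subseteq> L"
proof
  fix s assume x: "x \<in> L" and "s \<in> component EL I x"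
  then have "(col_adj EL I)\<^sup>*\<^sup>* x s" unfolding component_def by simp
  then show "s \<in> L"
  proof (induction rule: rtranclp_induct)
    case base then show ?case using x .
  next
    case (step b c) then show ?case using edge_mem unfolding col_adj_def by blast
  qed
qed

lemma comp_map:
  assumes x: "x \<in> L" and i: "1 \<le> i"
  shows "component EK {i + m} (psi x) = psi ` component EL {i} x"
proof
  show "component EK {i + m} (psi x) \<subseteq> psi ` component EL {i} x"
  proof
    fix s assume "s \<in> component EK {i + m} (psi x)"
    then have "(col_adj EK {i + m})\<^sup>*\<^sup>* (psi x) s" unfolding component_def by simp
    then have "\<exists>y. y \<in> L \<and> s = psi y \<and> (col_adj EL {i})\<^sup>*\<^sup>* x y"
    proof (induction rule: rtranclp_induct)
      case base then show ?case using x by blast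
    next
      case (step b c)
      then obtain y where y: "y \<in> L" "b = psi y" "(col_adj EL {i})\<^sup>*\<^sup>* x y" by blast
      from step.hyps(2) have e: "EK b (i + m) c \<or> EK c (i + m) b" unfolding col_adj_def by blast
      have cm: "m < i + m" using i by simp
      have "c \<in> psi ` L" using e closure_fwd[OF y(1) _ cm] closure_bwd[OF y(1) _ cm] y(2) by blast
      then obtain y' where y': "y' \<in> L" "c = psi y'" by blast
      have "EL y i y' \<or> EL y' i y" using e edge_iff[OF y(1) y'(1)] edge_iff[OF y'(1) y(1)] y(2) y'(2) by blast
      then have "col_adj EL {i} y y'" unfolding col_adj_def by blast
      then have "(col_adj EL {i})\<^sup>*\<^sup>* x y'" using y(3) by (rule rtranclp.rtrancl_into_rtrancl[rotated])
      then show ?case using y' by blast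
    qed
    then show "s \<in> psi ` component EL {i} x" unfolding component_def by blast
  qed
next
  show "psi ` component EL {i} x \<subseteq> component EK {i + m} (psi x)"
  proof
    fix s assume "s \<in> psi ` component EL {i} x"
    then obtain y where y: "s = psi y" "(col_adj EL {i})\<^sup>*\<^sup>* x y" unfolding component_def by blast
    have "(col_adj EK {i + m})\<^sup>*\<^sup>* (psi x) (psi y)" using y(2)
    proof (induction rule: rtranclp_induct)
      case base then show ?case by simp
    next
      case (step b c)
      from step.hyps(2) have e: "EL b i c \<or> EL c i b" unfolding col_adj_def by blast
      then have "b \<in> L" "c \<in> L" using edge_mem by blast+
      then have "EK (psi b) (i + m) (psi c) \<or> EK (psi c) (i + m) (psi b)" using e edge_iff by blast
      then have "col_adj EK {i + m} (psi b) (psi c)" unfolding col_adj_def by blast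
      then show ?case using step.IH by (rule rtranclp.rtrancl_into_rtrancl[rotated])
    qed
    then show "s \<in> component EK {i + m} (psi x)" unfolding component_def using y by simp
  qed
qed

lemma rank_eq:
  assumes x: "x \<in> L" and i: "1 \<le> i"
  shows "comp_rank EK (i + m) (psi x) = comp_rank EL i x"
proof -
  have "{length xs - 1 | xs. col_path EK (i + m) xs \<and> last xs = psi x}
      = {length ys - 1 | ys. col_path EL i ys \<and> last ys = x}"
  proof (rule set_eqI, rule iffI)
    fix d assume "d \<in> {length xs - 1 | xs. col_path EK (i + m) xs \<and> last xs = psi x}"
    then obtain xs where xs: "d = length xs - 1" "col_path EK (i + m) xs" "last xs = psi x" by blast
    have "set xs \<subseteq> psi ` L" using propagate[OF xs(2)] i xs(3) x by auto
    then obtain ys where ys: "xs = map psi ys" "set ys \<subseteq> L" "col_path EL i ys" using map_bwd xs(2) by blast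
    have ne: "ys \<noteq> []" using ys(3) unfolding col_path_def by simp
    then have "psi (last ys) = psi x" using xs(3) ys(1) by (simp add: last_map)
    then have "last ys = x" using psi_inj ys(2) ne x by (meson inj_onD last_in_set subsetD)
    then show "d \<in> {length ys - 1 | ys. col_path EL i ys \<and> last ys = x}" using xs(1) ys by auto
  next
    fix d assume "d \<in> {length ys - 1 | ys. col_path EL i ys \<and> last ys = x}"
    then obtain ys where ys: "d = length ys - 1" "col_path EL i ys" "last ys = x" by blast
    have s: "set ys \<subseteq> L" using path_mem[OF ys(2) EL_mem] ys(3) x by blast
    have ne: "ys \<noteq> []" using ys(2) unfolding col_path_def by simp
    have "col_path EK (i + m) (map psi ys)" using map_fwd[OF ys(2) s] .
    moreover have "last (map psi ys) = psi x" using ne ys(3) by (simp add: last_map)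
    ultimately show "d \<in> {length xs - 1 | xs. col_path EK (i + m) xs \<and> last xs = psi x}"
      using ys(1) by (intro CollectI exI[of _ "map psi ys"]) auto
  qed
  then show ?thesis unfolding comp_rank_def by simp
qed

lemma length_eq:
  assumes x: "x \<in> L" and i: "1 \<le> i"
  shows "comp_length EK (i + m) (psi x) = comp_length EL i x"
proof -
  have CK: "component EK {i + m} (psi x) = psi ` component EL {i} x" by (rule comp_map[OF x i])
  have CL: "component EL {i} x \<subseteq> L" by (rule compL_sub[OF x])
  have "{length xs - 1 | xs. col_path EK (i + m) xs \<and> hd xs \<in> component EK {i + m} (psi x)}
      = {length ys - 1 | ys. col_path EL i ys \<and> hd ys \<in> component EL {i} x}"
  proof (rule set_eqI, rule iffI)
    fix d assume "d \<in> {length xs - 1 | xs. col_path EK (i + m) xs \<and> hd xs \<in> component EK {i + m} (psi x)}"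
    then obtain xs where xs: "d = length xs - 1" "col_path EK (i + m) xs" "hd xs \<in> psi ` component EL {i} x"
      using CK by blast
    have ne0: "xs \<noteq> []" using xs(2) unfolding col_path_def by simp
    have "xs ! 0 \<in> psi ` L" using xs(3) CL ne0 by (auto simp: hd_conv_nth)
    then have "set xs \<subseteq> psi ` L" using propagate[OF xs(2)] i by auto
    then obtain ys where ys: "xs = map psi ys" "set ys \<subseteq> L" "col_path EL i ys" using map_bwd xs(2) by blast
    have ne: "ys \<noteq> []" using ys(3) unfolding col_path_def by simp
    obtain y where y: "y \<in> component EL {i} x" "hd xs = psi y" using xs(3) by blast
    have "psi (hd ys) = psi y" using y ys(1) ne by (simp add: hd_map)
    then have "hd ys = y" using psi_inj ys(2) ne y(1) CL by (meson inj_onD hd_in_set subsetD)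
    then show "d \<in> {length ys - 1 | ys. col_path EL i ys \<and> hd ys \<in> component EL {i} x}"
      using xs(1) ys y by auto
  next
    fix d assume "d \<in> {length ys - 1 | ys. col_path EL i ys \<and> hd ys \<in> component EL {i} x}"
    then obtain ys where ys: "d = length ys - 1" "col_path EL i ys" "hd ys \<in> component EL {i} x" by blast
    have s: "set ys \<subseteq> L" using path_mem[OF ys(2) EL_mem] ys(3) CL by blast
    have ne: "ys \<noteq> []" using ys(2) unfolding col_path_def by simp
    have "col_path EK (i + m) (map psi ys)" using map_fwd[OF ys(2) s] .
    moreover have "hd (map psi ys) \<in> component EK {i + m} (psi x)" using ne ys(3) CK by (simp add: hd_map)
    ultimately show "d \<in> {length xs - 1 | xs. col_path EK (i + m) xs \<and> hd xs \<in> component EK {i + m} (psi x)}"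
      using ys(1) by (intro CollectI exI[of _ "map psi ys"]) auto
  qed
  then show ?thesis unfolding comp_length_def by simp
qed

lemma weight_eq:
  assumes x: "x \<in> L" and i: "1 \<le> i"
  shows "weight EK (i + m) (psi x) = weight EL i x"
  unfolding weight_def using rank_eq[OF x i] length_eq[OF x i] by simp

end


lemma edge_cell:
  assumes "tab_edge mm N P Q S i T"
  obtains r c where "(r, c) \<in> skew_cells mm P Q" "S (r, c) = T (r, c) + 1" "T (r, c) = i"
    "\<forall>y \<in> skew_cells mm P Q. y \<noteq> (r, c) \<longrightarrow> S y = T y"
  using assms unfolding tab_edge_def by auto

lemma garr_edge:
  assumes z: "(r, c) \<in> skew_cells mm P Q" "S (r, c) = T (r, c) + 1" "T (r, c) = i"
    and o: "\<forall>y \<in> skew_cells mm P Q. y \<noteq> (r, c) \<longrightarrow> S y = T y"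
    and r': "1 \<le> r'" "r' \<le> mm"
  shows "garr mm P Q S (int i) (int i + 1 - int r') \<noteq> garr mm P Q T (int i) (int i + 1 - int r') \<longleftrightarrow> r' = r"
proof
  assume ne: "garr mm P Q S (int i) (int i + 1 - int r') \<noteq> garr mm P Q T (int i) (int i + 1 - int r')"
  show "r' = r"
  proof (rule ccontr)
    assume "r' \<noteq> r"
    then have "{c'. (r', c') \<in> skew_cells mm P Q \<and> int (S (r', c')) \<le> int i}
             = {c'. (r', c') \<in> skew_cells mm P Q \<and> int (T (r', c')) \<le> int i}" using o by auto
    then show False using ne garr_row[OF r', of P Q S "int i"] garr_row[OF r', of P Q T "int i"] by simp
  qed
next
  assume rr: "r' = r"
  define A where "A = {c'. (r, c') \<in> skew_cells mm P Q \<and> int (S (r, c')) \<le> int i}"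
  have "{c'. (r, c') \<in> skew_cells mm P Q \<and> int (T (r, c')) \<le> int i} = insert c A"
    using o z unfolding A_def by auto
  moreover have "c \<notin> A" using z unfolding A_def by auto
  moreover have "finite A" unfolding A_def by (rule row_finite)
  ultimately show "garr mm P Q S (int i) (int i + 1 - int r') \<noteq> garr mm P Q T (int i) (int i + 1 - int r')"
    using garr_row[OF r', of P Q S "int i"] garr_row[OF r', of P Q T "int i"] rr unfolding A_def by simp
qed

lemma garr_edge_pos:
  assumes z: "(r, c) \<in> skew_cells mm P Q" "T (r, c) = i"
  shows "1 \<le> garr mm P Q T (int i) (int i + 1 - int r)"
proof -
  have r: "1 \<le> r" "r \<le> mm" using z by (auto simp: cells_iff)
  have "c \<in> {c'. (r, c') \<in> skew_cells mm P Q \<and> int (T (r, c')) \<le> int i}" using z by simp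
  then have "card {c'. (r, c') \<in> skew_cells mm P Q \<and> int (T (r, c')) \<le> int i} \<noteq> 0"
    using row_finite by (metis card_0_eq empty_iff)
  then show ?thesis using garr_row[OF r, of P Q T "int i"] by simp
qed

lemma diff_pos_edge:
  assumes z: "(r, c) \<in> skew_cells mm P Q" "S (r, c) = T (r, c) + 1" "T (r, c) = i"
    and o: "\<forall>y \<in> skew_cells mm P Q. y \<noteq> (r, c) \<longrightarrow> S y = T y"
  shows "diff_pos mm P Q S T (int i) = int i + 1 - int r"
  unfolding diff_pos_def
proof (rule the_equality)
  have r: "1 \<le> r" "r \<le> mm" using z by (auto simp: cells_iff)
  show "int i + 1 - int r \<in> Cset mm (int i) \<and> garr mm P Q S (int i) (int i + 1 - int r) \<noteq> garr mm P Q T (int i) (int i + 1 - int r)"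
    using garr_edge[OF z o r] r by (simp add: Cset_def)
next
  fix j assume j: "j \<in> Cset mm (int i) \<and> garr mm P Q S (int i) j \<noteq> garr mm P Q T (int i) j"
  define r' where "r' = nat (int i + 1 - j)"
  have r': "1 \<le> r'" "r' \<le> mm" "j = int i + 1 - int r'" using j unfolding r'_def Cset_def by auto
  then have "r' = r" using garr_edge[OF z o r'(1,2)] j by simp
  then show "j = int i + 1 - int r" using r' by simp
qed

lemma prod_shift: "prod f {a + d .. b + d} = prod (\<lambda>k. f (k + d)) {a .. (b::int)}"
proof -
  have inj: "inj_on (\<lambda>k. k + d) {a .. b}" by (simp add: inj_on_def)
  have "prod f ((\<lambda>k. k + d) ` {a..b}) = prod (f \<circ> (\<lambda>k. k + d)) {a..b}" by (rule prod.reindex[OF inj])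
  then show ?thesis by (simp add: comp_def)
qed

lemma prod_shift_minus: "prod f ({a + d .. b + d} - {x + d}) = prod (\<lambda>k. f (k + d)) ({a .. (b::int)} - {x})"
proof -
  have inj: "inj_on (\<lambda>k. k + d) ({a .. b} - {x})" by (simp add: inj_on_def)
  have "(\<lambda>k. k + d) ` ({a .. b} - {x}) = (\<lambda>k. k + d) ` {a .. b} - (\<lambda>k. k + d) ` {x}"
    by (rule image_set_diff) (simp add: inj_on_def)
  then have e: "(\<lambda>k. k + d) ` ({a .. b} - {x}) = {a + d .. b + d} - {x + d}" by simp
  have "prod f ((\<lambda>k. k + d) ` ({a..b} - {x})) = prod (f \<circ> (\<lambda>k. k + d)) ({a..b} - {x})" by (rule prod.reindex[OF inj])
  then show ?thesis by (simp add: comp_def e)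
qed

lemma prod_split: "a \<le> b + 1 \<Longrightarrow> b \<le> c \<Longrightarrow> prod f {a .. c} = prod f {a .. b} * prod f {b + 1 .. (c::int)}"
proof -
  assume "a \<le> b + 1" "b \<le> c"
  then have "{a .. c} = {a .. b} \<union> {b + 1 .. c}" by auto
  then show ?thesis by (simp add: prod.union_disjoint)
qed

lemma prod_split_minus: "a \<le> b + 1 \<Longrightarrow> b < x \<Longrightarrow> x \<le> c \<Longrightarrow>
    prod f ({a .. c} - {x}) = prod f {a .. b} * prod f ({b + 1 .. (c::int)} - {x})"
proof -
  assume "a \<le> b + 1" "b < x" "x \<le> c"
  then have e: "{a .. c} - {x} = {a .. b} \<union> ({b + 1 .. c} - {x})" by auto
  have "prod f ({a..b} \<union> ({b+1..c} - {x})) = prod f {a..b} * prod f ({b+1..c} - {x})"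
    by (rule prod.union_disjoint) auto
  then show ?thesis by (simp only: e)
qed

context S65 begin

lemma phi_arr_high:
  assumes "int m \<le> a" "k \<le> a"
  shows "phi_arr m g a k = (if k \<le> a - int m then 0 else g (a - int m) (k - int m))"
  using assms n2 nm unfolding phi_arr_def by auto

lemma gK:
  assumes T: "T \<in> L" and a: "int m \<le> a" "a \<le> int (m + n)" and k: "k \<in> Cset (m + n) a"
  shows "garr (m + n) (ext_P m P) zero_Q (psi T) a k = (if k \<le> a - int m then 0 else garr m P Q T (a - int m) (k - int m))"
proof -
  have "0 \<le> a" using a by simp
  then show ?thesis using garr_psi[OF T _ a(2) k] phi_arr_high[OF a(1)] k by (simp add: Cset_def)
qed

end

context S65 begin

lemma coef_eq:
  assumes e: "EL S i T"
  shows "Xcoef (m + n) (ext_P m P) zero_Q (psi T) (psi S) (i + m) = Xcoef m P Q T S i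
       \<and> Ycoef (m + n) (ext_P m P) zero_Q (psi S) (psi T) (i + m) = Ycoef m P Q S T i"
proof -
  obtain r c where z: "(r, c) \<in> Lc" "S (r, c) = T (r, c) + 1" "T (r, c) = i"
    and o: "\<forall>y \<in> Lc. y \<noteq> (r, c) \<longrightarrow> S y = T y"
    using edge_cell[OF e] by blast
  have ST: "S \<in> L" "T \<in> L" using edge_mem[OF e] by auto
  have r: "1 \<le> r" "r \<le> m" using z by (auto simp: Lc_iff)
  have i1: "1 \<le> i" using tabsD(2)[OF ST(2) z(1)] z by simp
  have i2: "i + 1 \<le> n" using tabsD(2)[OF ST(1) z(1)] z by simp
  have zK: "(r, c) \<in> Kc" using Lc_Kc[OF z(1)] .
  have zK2: "psi S (r, c) = psi T (r, c) + 1" "psi T (r, c) = i + m"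
    using z psi_L[OF z(1)] by auto
  have oK: "\<forall>y \<in> Kc. y \<noteq> (r, c) \<longrightarrow> psi S y = psi T y"
  proof (intro ballI impI)
    fix w assume w: "w \<in> Kc" "w \<noteq> (r, c)"
    show "psi S w = psi T w"
    proof (cases "w \<in> Lc")
      case True then show ?thesis using o w psi_L' by simp
    next
      case False then show ?thesis using psi_Q' w by blast
    qed
  qed
  define j where "j = int i + 1 - int r"
  have dL: "diff_pos m P Q S T (int i) = j" unfolding j_def by (rule diff_pos_edge[OF z o])
  have dK: "diff_pos (m + n) (ext_P m P) zero_Q (psi S) (psi T) (int (i + m)) = j + int m"
    using diff_pos_edge[OF zK zK2 oK] unfolding j_def by simp
  define g where "g = garr m P Q T"
  define gk where "gk = garr (m + n) (ext_P m P) zero_Q (psi T)"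
  define G where "G = g (int i) j"
  have G1: "1 \<le> G" unfolding G_def g_def j_def by (rule garr_edge_pos[of r c m P Q T i, OF z(1,3)])
  have gk: "gk a k = (if k \<le> a - int m then 0 else g (a - int m) (k - int m))"
    if "int m \<le> a" "a \<le> int (m + n)" "k \<in> Cset (m + n) a" for a k
    unfolding gk_def g_def using gK[OF ST(2) that] .
  have jr: "j + int m \<ge> int i + 1" "j \<le> int i" using r unfolding j_def by auto
  have GK: "gk (int i + int m) (j + int m) = G"
    using gk[of "int i + int m" "j + int m"] jr i2 unfolding G_def by (simp add: Cset_def)
  define A1 where "A1 = (\<Prod>k\<in>{int i - int n + 1 .. int i}. real_of_int (G + (j + int m) - k - 1))"
  define B1 where "B1 = (\<Prod>k\<in>{int i - int n + 1 .. int i}. real_of_int (G + (j + int m) - k))"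
  have A1: "A1 \<noteq> 0" unfolding A1_def using G1 jr by (subst prod_zero_iff) auto
  have B1: "B1 \<noteq> 0" unfolding B1_def using G1 jr by (subst prod_zero_iff) auto
  have XN: "(\<Prod>k\<in>Cset (m + n) (int i + int m + 1). real_of_int (G - gk (int i + int m + 1) k + (j + int m) - k))
      = A1 * (\<Prod>k\<in>Cset m (int i + 1). real_of_int (G - g (int i + 1) k + j - k))"
  proof -
    let ?F = "\<lambda>k. real_of_int (G - gk (int i + int m + 1) k + (j + int m) - k)"
    have "Cset (m + n) (int i + int m + 1) = {int i - int n + 2 .. int i + int m + 1}" by (simp add: Cset_def)
    then have "prod ?F (Cset (m + n) (int i + int m + 1)) = prod ?F {int i - int n + 2 .. int i + 1} * prod ?F {int i + 1 + 1 .. int i + int m + 1}"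
      using prod_split[of "int i - int n + 2" "int i + 1" "int i + int m + 1" ?F] by simp
    moreover have "prod ?F {int i - int n + 2 .. int i + 1} = A1"
    proof -
      have "prod ?F {int i - int n + 2 .. int i + 1} = prod ?F {(int i - int n + 1) + 1 .. int i + 1}" by (simp add: algebra_simps)
      also have "\<dots> = prod (\<lambda>k. ?F (k + 1)) {int i - int n + 1 .. int i}" by (rule prod_shift)
      also have "\<dots> = A1" unfolding A1_def
      proof (rule prod.cong[OF refl])
        fix k assume k: "k \<in> {int i - int n + 1 .. int i}"
        have "gk (int i + int m + 1) (k + 1) = 0" using gk[of "int i + int m + 1" "k + 1"] k i2 by (simp add: Cset_def)
        then show "?F (k + 1) = real_of_int (G + (j + int m) - k - 1)" by simp
      qed
      finally show ?thesis .
    qed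
    moreover have "prod ?F {int i + 1 + 1 .. int i + int m + 1} = (\<Prod>k\<in>Cset m (int i + 1). real_of_int (G - g (int i + 1) k + j - k))"
    proof -
      have "prod ?F {int i + 1 + 1 .. int i + int m + 1} = prod ?F {(int i + 2 - int m) + int m .. (int i + 1) + int m}" by (simp add: algebra_simps)
      also have "\<dots> = prod (\<lambda>k. ?F (k + int m)) {int i + 2 - int m .. int i + 1}" by (rule prod_shift)
      also have "{int i + 2 - int m .. int i + 1} = Cset m (int i + 1)" by (simp add: Cset_def)
      also have "prod (\<lambda>k. ?F (k + int m)) (Cset m (int i + 1)) = (\<Prod>k\<in>Cset m (int i + 1). real_of_int (G - g (int i + 1) k + j - k))"
      proof (rule prod.cong[OF refl])
        fix k assume k: "k \<in> Cset m (int i + 1)"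
        have "gk (int i + int m + 1) (k + int m) = g (int i + 1) k"
          using gk[of "int i + int m + 1" "k + int m"] k i2 by (simp add: Cset_def)
        then show "?F (k + int m) = real_of_int (G - g (int i + 1) k + j - k)" by simp
      qed
      finally show ?thesis .
    qed
    ultimately show ?thesis by simp
  qed
  have XD: "(\<Prod>k\<in>Cset (m + n) (int i + int m) - {j + int m}. real_of_int (G - gk (int i + int m) k + (j + int m) - k - 1))
      = A1 * (\<Prod>k\<in>Cset m (int i) - {j}. real_of_int (G - g (int i) k + j - k - 1))"
  proof -
    let ?F = "\<lambda>k. real_of_int (G - gk (int i + int m) k + (j + int m) - k - 1)"
    have "Cset (m + n) (int i + int m) = {int i - int n + 1 .. int i + int m}" by (simp add: Cset_def)
    then have "prod ?F (Cset (m + n) (int i + int m) - {j + int m}) = prod ?F {int i - int n + 1 .. int i} * prod ?F ({int i + 1 .. int i + int m} - {j + int m})"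
      using prod_split_minus[of "int i - int n + 1" "int i" "j + int m" "int i + int m" ?F] jr by simp
    moreover have "prod ?F {int i - int n + 1 .. int i} = A1" unfolding A1_def
    proof (rule prod.cong[OF refl])
      fix k assume k: "k \<in> {int i - int n + 1 .. int i}"
      have "gk (int i + int m) k = 0" using gk[of "int i + int m" k] k i2 by (simp add: Cset_def)
      then show "?F k = real_of_int (G + (j + int m) - k - 1)" by simp
    qed
    moreover have "prod ?F ({int i + 1 .. int i + int m} - {j + int m}) = (\<Prod>k\<in>Cset m (int i) - {j}. real_of_int (G - g (int i) k + j - k - 1))"
    proof -
      have "prod ?F ({int i + 1 .. int i + int m} - {j + int m}) = prod ?F ({(int i + 1 - int m) + int m .. int i + int m} - {j + int m})" by (simp add: algebra_simps)
      also have "\<dots> = prod (\<lambda>k. ?F (k + int m)) ({int i + 1 - int m .. int i} - {j})" by (rule prod_shift_minus)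
      also have "{int i + 1 - int m .. int i} = Cset m (int i)" by (simp add: Cset_def)
      also have "prod (\<lambda>k. ?F (k + int m)) (Cset m (int i) - {j}) = (\<Prod>k\<in>Cset m (int i) - {j}. real_of_int (G - g (int i) k + j - k - 1))"
      proof (rule prod.cong[OF refl])
        fix k assume k: "k \<in> Cset m (int i) - {j}"
        have "gk (int i + int m) (k + int m) = g (int i) k"
          using gk[of "int i + int m" "k + int m"] k i2 by (simp add: Cset_def)
        then show "?F (k + int m) = real_of_int (G - g (int i) k + j - k - 1)" by simp
      qed
      finally show ?thesis .
    qed
    ultimately show ?thesis by simp
  qed
  have YN: "(\<Prod>k\<in>Cset (m + n) (int i + int m - 1). real_of_int (G - gk (int i + int m - 1) k + (j + int m) - k - 1))
      = B1 * (\<Prod>k\<in>Cset m (int i - 1). real_of_int (G - g (int i - 1) k + j - k - 1))"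
  proof -
    let ?F = "\<lambda>k. real_of_int (G - gk (int i + int m - 1) k + (j + int m) - k - 1)"
    have "Cset (m + n) (int i + int m - 1) = {int i - int n .. int i + int m - 1}" by (simp add: Cset_def)
    then have "prod ?F (Cset (m + n) (int i + int m - 1)) = prod ?F {int i - int n .. int i - 1} * prod ?F {int i - 1 + 1 .. int i + int m - 1}"
      using prod_split[of "int i - int n" "int i - 1" "int i + int m - 1" ?F] r by simp
    moreover have "prod ?F {int i - int n .. int i - 1} = B1"
    proof -
      have "B1 = (\<Prod>k\<in>{(int i - int n) + 1 .. (int i - 1) + 1}. real_of_int (G + (j + int m) - k))"
        unfolding B1_def by simp
      also have "\<dots> = (\<Prod>k\<in>{int i - int n .. int i - 1}. real_of_int (G + (j + int m) - (k + 1)))"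
        by (rule prod_shift)
      also have "\<dots> = prod ?F {int i - int n .. int i - 1}"
      proof (rule prod.cong[OF refl])
        fix k assume k: "k \<in> {int i - int n .. int i - 1}"
        have "gk (int i + int m - 1) k = 0" using gk[of "int i + int m - 1" k] k i1 i2 by (simp add: Cset_def)
        then show "real_of_int (G + (j + int m) - (k + 1)) = ?F k" by simp
      qed
      finally show ?thesis by simp
    qed
    moreover have "prod ?F {int i - 1 + 1 .. int i + int m - 1} = (\<Prod>k\<in>Cset m (int i - 1). real_of_int (G - g (int i - 1) k + j - k - 1))"
    proof -
      have "prod ?F {int i - 1 + 1 .. int i + int m - 1} = prod ?F {(int i - int m) + int m .. (int i - 1) + int m}" by (simp add: algebra_simps)
      also have "\<dots> = prod (\<lambda>k. ?F (k + int m)) {int i - int m .. int i - 1}" by (rule prod_shift)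
      also have "{int i - int m .. int i - 1} = Cset m (int i - 1)" by (simp add: Cset_def)
      also have "prod (\<lambda>k. ?F (k + int m)) (Cset m (int i - 1)) = (\<Prod>k\<in>Cset m (int i - 1). real_of_int (G - g (int i - 1) k + j - k - 1))"
      proof (rule prod.cong[OF refl])
        fix k assume k: "k \<in> Cset m (int i - 1)"
        have "gk (int i + int m - 1) (k + int m) = g (int i - 1) k"
          using gk[of "int i + int m - 1" "k + int m"] k i1 i2 by (simp add: Cset_def)
        then show "?F (k + int m) = real_of_int (G - g (int i - 1) k + j - k - 1)" by simp
      qed
      finally show ?thesis .
    qed
    ultimately show ?thesis by simp
  qed
  have YD: "(\<Prod>k\<in>Cset (m + n) (int i + int m) - {j + int m}. real_of_int (G - gk (int i + int m) k + (j + int m) - k))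
      = B1 * (\<Prod>k\<in>Cset m (int i) - {j}. real_of_int (G - g (int i) k + j - k))"
  proof -
    let ?F = "\<lambda>k. real_of_int (G - gk (int i + int m) k + (j + int m) - k)"
    have "Cset (m + n) (int i + int m) = {int i - int n + 1 .. int i + int m}" by (simp add: Cset_def)
    then have "prod ?F (Cset (m + n) (int i + int m) - {j + int m}) = prod ?F {int i - int n + 1 .. int i} * prod ?F ({int i + 1 .. int i + int m} - {j + int m})"
      using prod_split_minus[of "int i - int n + 1" "int i" "j + int m" "int i + int m" ?F] jr by simp
    moreover have "prod ?F {int i - int n + 1 .. int i} = B1" unfolding B1_def
    proof (rule prod.cong[OF refl])
      fix k assume k: "k \<in> {int i - int n + 1 .. int i}"
      have "gk (int i + int m) k = 0" using gk[of "int i + int m" k] k i2 by (simp add: Cset_def)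
      then show "?F k = real_of_int (G + (j + int m) - k)" by simp
    qed
    moreover have "prod ?F ({int i + 1 .. int i + int m} - {j + int m}) = (\<Prod>k\<in>Cset m (int i) - {j}. real_of_int (G - g (int i) k + j - k))"
    proof -
      have "prod ?F ({int i + 1 .. int i + int m} - {j + int m}) = prod ?F ({(int i + 1 - int m) + int m .. int i + int m} - {j + int m})" by (simp add: algebra_simps)
      also have "\<dots> = prod (\<lambda>k. ?F (k + int m)) ({int i + 1 - int m .. int i} - {j})" by (rule prod_shift_minus)
      also have "{int i + 1 - int m .. int i} = Cset m (int i)" by (simp add: Cset_def)
      also have "prod (\<lambda>k. ?F (k + int m)) (Cset m (int i) - {j}) = (\<Prod>k\<in>Cset m (int i) - {j}. real_of_int (G - g (int i) k + j - k))"
      proof (rule prod.cong[OF refl])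
        fix k assume k: "k \<in> Cset m (int i) - {j}"
        have "gk (int i + int m) (k + int m) = g (int i) k"
          using gk[of "int i + int m" "k + int m"] k i2 by (simp add: Cset_def)
        then show "?F (k + int m) = real_of_int (G - g (int i) k + j - k)" by simp
      qed
      finally show ?thesis .
    qed
    ultimately show ?thesis by simp
  qed
  have X: "Xcoef (m + n) (ext_P m P) zero_Q (psi T) (psi S) (i + m) = Xcoef m P Q T S i"
  proof -
    have "Xcoef (m + n) (ext_P m P) zero_Q (psi T) (psi S) (i + m)
        = - (A1 * (\<Prod>k\<in>Cset m (int i + 1). real_of_int (G - g (int i + 1) k + j - k)))
          / (A1 * (\<Prod>k\<in>Cset m (int i) - {j}. real_of_int (G - g (int i) k + j - k - 1)))"
      unfolding Xcoef_def Let_def dK gk_def[symmetric] using GK XN XD by (simp add: algebra_simps)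
    also have "\<dots> = Xcoef m P Q T S i"
      unfolding Xcoef_def Let_def dL g_def[symmetric] G_def[symmetric] using A1 by simp
    finally show ?thesis .
  qed
  have Y: "Ycoef (m + n) (ext_P m P) zero_Q (psi S) (psi T) (i + m) = Ycoef m P Q S T i"
  proof -
    have "Ycoef (m + n) (ext_P m P) zero_Q (psi S) (psi T) (i + m)
        = (B1 * (\<Prod>k\<in>Cset m (int i - 1). real_of_int (G - g (int i - 1) k + j - k - 1)))
          / (B1 * (\<Prod>k\<in>Cset m (int i) - {j}. real_of_int (G - g (int i) k + j - k)))"
      unfolding Ycoef_def Let_def dK gk_def[symmetric] using GK YN YD by (simp add: algebra_simps)
    also have "\<dots> = Ycoef m P Q S T i"
      unfolding Ycoef_def Let_def dL g_def[symmetric] G_def[symmetric] using B1 by simp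
    finally show ?thesis .
  qed
  show ?thesis using X Y by simp
qed

end

theorem proposition6p5:
  fixes m n :: nat and P Q :: "nat \<Rightarrow> nat"
  assumes "2 \<le> n" and "n \<le> m"
    and "\<forall>r r'. 1 \<le> r \<and> r \<le> r' \<and> r' \<le> m \<longrightarrow> P r' \<le> P r"
    and "\<forall>r r'. 1 \<le> r \<and> r \<le> r' \<and> r' \<le> m \<longrightarrow> Q r' \<le> Q r"
    and "\<forall>r. 1 \<le> r \<and> r \<le> m \<longrightarrow> Q r \<le> P r"
    and "\<forall>c. card {r. (r, c) \<in> skew_cells m P Q} \<le> n"
  shows
    "(\<forall>x \<in> skew_tabs m n P Q. \<exists>y \<in> skew_tabs (m + n) (m + n) (ext_P m P) zero_Q.
        \<forall>k \<in> {0 .. int (m + n)}. \<forall>l \<in> Cset (m + n) k.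
          garr (m + n) (ext_P m P) zero_Q y k l = phi_arr m (garr m P Q x) k l)
     \<and> inj_on (phi m n P Q) (skew_tabs m n P Q)
     \<and> (\<forall>S \<in> skew_tabs m n P Q. \<forall>T \<in> skew_tabs m n P Q. \<forall>i.
          tab_edge m n P Q S i T \<longleftrightarrow>
          tab_edge (m + n) (m + n) (ext_P m P) zero_Q (phi m n P Q S) (i + m) (phi m n P Q T))
     \<and> phi m n P Q ` skew_tabs m n P Q =
         component (tab_edge (m + n) (m + n) (ext_P m P) zero_Q) {m + 1 .. m + n - 1}
           (phi m n P Q (tab_max m n P Q))
     \<and> (\<forall>x \<in> skew_tabs m n P Q. \<forall>i \<in> {1 .. n - 1}.
          weight (tab_edge (m + n) (m + n) (ext_P m P) zero_Q) (i + m) (phi m n P Q x)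
          = weight (tab_edge m n P Q) i x)
     \<and> (\<forall>S T i. tab_edge m n P Q S i T \<longrightarrow>
          Xcoef (m + n) (ext_P m P) zero_Q (phi m n P Q T) (phi m n P Q S) (i + m) = Xcoef m P Q T S i
          \<and> Ycoef (m + n) (ext_P m P) zero_Q (phi m n P Q S) (phi m n P Q T) (i + m) = Ycoef m P Q S T i)"
  proof -
  interpret S65 m n P Q by (rule S65.intro) (fact assms)+
  have pe: "\<And>x. x \<in> L \<Longrightarrow> phi m n P Q x = psi x" by (rule phi_eq)
  have c1: "\<forall>x \<in> L. \<exists>y \<in> K. \<forall>k \<in> {0 .. int (m + n)}. \<forall>l \<in> Cset (m + n) k.
          garr (m + n) (ext_P m P) zero_Q y k l = phi_arr m (garr m P Q x) k l"
    using psi_in_K garr_psi by fastforce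
  have c2: "inj_on (phi m n P Q) L"
    using psi_inj inj_on_cong[of L "phi m n P Q" psi] pe by simp
  have c3: "\<forall>S \<in> L. \<forall>T \<in> L. \<forall>i. EL S i T \<longleftrightarrow> EK (phi m n P Q S) (i + m) (phi m n P Q T)"
    using edge_iff pe by simp
  have img: "phi m n P Q ` L = psi ` L" using pe by (rule image_cong[OF refl])
  have c4: "phi m n P Q ` L = component EK {m + 1 .. m + n - 1} (phi m n P Q (tab_max m n P Q))"
    using img comp_eq tab_max_eq pe[OF Mx_L] by simp
  have c5: "\<forall>x \<in> L. \<forall>i \<in> {1 .. n - 1}. weight EK (i + m) (phi m n P Q x) = weight EL i x"
    using weight_eq pe by simp
  have c6: "\<forall>S T i. EL S i T \<longrightarrow>
          Xcoef (m + n) (ext_P m P) zero_Q (phi m n P Q T) (phi m n P Q S) (i + m) = Xcoef m P Q T S i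
          \<and> Ycoef (m + n) (ext_P m P) zero_Q (phi m n P Q S) (phi m n P Q T) (i + m) = Ycoef m P Q S T i"
  proof (intro allI impI)
    fix S T i assume e: "EL S i T"
    then have "S \<in> L" "T \<in> L" using edge_mem by blast+
    then show "Xcoef (m + n) (ext_P m P) zero_Q (phi m n P Q T) (phi m n P Q S) (i + m) = Xcoef m P Q T S i
          \<and> Ycoef (m + n) (ext_P m P) zero_Q (phi m n P Q S) (phi m n P Q T) (i + m) = Ycoef m P Q S T i"
      using coef_eq[OF e] pe by simp
  qed
  show ?thesis using c1 c2 c3 c4 c5 c6 by blast
qed

end
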